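(* Let $\Omega=\mathbb{T}^d$ ($d=2$ or $3$), $\nu>\kappa>0$, $\mu=\nu-\sqrt{\nu^{2}-\kappa^{2}}$, $\lambda=\sqrt{\nu^{2}-\kappa^{2}}$. Let $(\varrho_n,u_n)$ be a smooth solution, with $\varrho_n>0$, of $$\partial_{t}\varrho+\mathrm{div}(\varrho u)=0,\qquad \partial_{t}(\varrho u)+\mathrm{div}(\varrho u\otimes u)-2\nu\,\mathrm{div}(\varrho D(u))=2\kappa^2\varrho\nabla\Big(\frac{\Delta\sqrt{\varrho}}{\sqrt{\varrho}}\Big)$$ on $\Omega$, and let $w_n=u_n+\mu\nabla\log\varrho_n$. Then $$\frac{d}{dt}\int_{\Omega}\varrho_{n}\frac{|w_{n}|^{2}}{2}dx+2\lambda\int_{\Omega}\varrho_{n}|Dw_{n}|^{2}dx+\mu\int_{\Omega}\varrho_{n}|\nabla w_{n}|^{2}dx=0.$$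
   Context: $D(w)=(\nabla w+\nabla^{t}w)/2$. *)

theory Defs
  imports "HOL-Analysis.Analysis"
begin

definition dirder :: "('a::real_normed_vector \<Rightarrow> 'b::real_normed_vector) \<Rightarrow> 'a \<Rightarrow> 'a \<Rightarrow> 'b" where
  "dirder f v = (\<lambda>z. frechet_derivative f (at z) v)"

definition smooth_on :: "'a::real_normed_vector set \<Rightarrow> ('a \<Rightarrow> 'b::real_normed_vector) \<Rightarrow> bool" where
  "smooth_on S f \<longleftrightarrow> open S \<and>
     (\<forall>vs. \<forall>z\<in>S. (fold (\<lambda>v g. dirder g v) vs f) differentiable (at z))"

definition pd :: "'n::finite \<Rightarrow> (real^'n \<Rightarrow> real) \<Rightarrow> real^'n \<Rightarrow> real" where
  "pd i f x = deriv (\<lambda>s. f (x + s *\<^sub>R axis i 1)) 0"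

definition dt :: "(real \<Rightarrow> real^'n \<Rightarrow> real) \<Rightarrow> real \<Rightarrow> real^'n \<Rightarrow> real" where
  "dt f t x = deriv (\<lambda>s. f s x) t"

definition lap :: "(real^'n::finite \<Rightarrow> real) \<Rightarrow> real^'n \<Rightarrow> real" where
  "lap f x = (\<Sum>i\<in>UNIV. pd i (pd i f) x)"

definition grad :: "(real^'n::finite \<Rightarrow> real) \<Rightarrow> real^'n \<Rightarrow> real^'n" where
  "grad f x = (\<chi> i. pd i f x)"

definition symgrad :: "(real^'n::finite \<Rightarrow> real^'n) \<Rightarrow> 'n \<Rightarrow> 'n \<Rightarrow> real^'n \<Rightarrow> real" where
  "symgrad v i j x = (pd j (\<lambda>y. v y $ i) x + pd i (\<lambda>y. v y $ j) x) / 2"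

(* the unit cell [0,1]^d, a fundamental domain of the torus T^d *)
definition unit_cell :: "(real^'n::finite) set" where
  "unit_cell = cbox 0 (\<chi> i. 1)"

(* spatially 1-periodic in every coordinate, i.e. a function on T^d *)
definition periodic_field :: "(real^'n::finite \<Rightarrow> 'b) \<Rightarrow> bool" where
  "periodic_field f \<longleftrightarrow> (\<forall>x i. f (x + axis i 1) = f x)"

end

theory Submission
  imports Defs
begin


section \<open>Directional derivative rules\<close>

lemma dirder_eqI:
  assumes "(f has_derivative f') (at z)"
  shows "dirder f v z = f' v"
  using assms by (metis dirder_def frechet_derivative_at)

lemma dirder_has_derivative:
  assumes "f differentiable at z"
  shows "(f has_derivative (\<lambda>v. dirder f v z)) (at z)"
  using assms frechet_derivative_works[of f "at z"] unfolding dirder_def by simp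

lemma dirder_local:
  assumes "open X" "z \<in> X" "\<And>y. y \<in> X \<Longrightarrow> f y = g y" "f differentiable at z"
  shows "dirder f v z = dirder g v z"
  unfolding dirder_def using frechet_derivative_transform_within_open[OF assms(4,1,2)] assms(3) by simp

lemma diffble_local:
  assumes "open X" "z \<in> X" "\<And>y. y \<in> X \<Longrightarrow> f y = g y" "f differentiable at z"
  shows "g differentiable at z"
  using assms by (meson differentiable_def has_derivative_transform_within_open)

lemma dirder_const: "dirder (\<lambda>z. c) v z = 0"
  by (rule dirder_eqI) (rule has_derivative_const)

lemma dirder_add:
  assumes "f differentiable at z" "g differentiable at z"
  shows "dirder (\<lambda>z. f z + g z) v z = dirder f v z + dirder g v z"
  by (rule dirder_eqI, rule has_derivative_eq_rhs,
      rule has_derivative_add[OF dirder_has_derivative[OF assms(1)] dirder_has_derivative[OF assms(2)]]) simp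

lemma dirder_diff:
  assumes "f differentiable at z" "g differentiable at z"
  shows "dirder (\<lambda>z. f z - g z) v z = dirder f v z - dirder g v z"
  by (rule dirder_eqI, rule has_derivative_eq_rhs,
      rule has_derivative_diff[OF dirder_has_derivative[OF assms(1)] dirder_has_derivative[OF assms(2)]]) simp

lemma dirder_minus:
  assumes "f differentiable at z"
  shows "dirder (\<lambda>z. - f z) v z = - dirder f v z"
  by (rule dirder_eqI, rule has_derivative_eq_rhs,
      rule has_derivative_minus[OF dirder_has_derivative[OF assms(1)]]) simp

lemma dirder_mult:
  fixes f g :: "'a::real_normed_vector \<Rightarrow> real"
  assumes "f differentiable at z" "g differentiable at z"
  shows "dirder (\<lambda>z. f z * g z) v z = f z * dirder g v z + dirder f v z * g z"
  by (rule dirder_eqI, rule has_derivative_eq_rhs,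
      rule has_derivative_mult[OF dirder_has_derivative[OF assms(1)] dirder_has_derivative[OF assms(2)]]) simp

lemma dirder_cmult:
  fixes f :: "'a::real_normed_vector \<Rightarrow> real"
  assumes "f differentiable at z"
  shows "dirder (\<lambda>z. c * f z) v z = c * dirder f v z"
  by (rule dirder_eqI, rule has_derivative_eq_rhs,
      rule has_derivative_mult_right[OF dirder_has_derivative[OF assms(1)]]) simp

lemma dirder_sum:
  fixes f :: "'i \<Rightarrow> 'a::real_normed_vector \<Rightarrow> real"
  assumes "\<And>i. i \<in> A \<Longrightarrow> f i differentiable at z"
  shows "dirder (\<lambda>z. \<Sum>i\<in>A. f i z) v z = (\<Sum>i\<in>A. dirder (f i) v z)"
  by (rule dirder_eqI, rule has_derivative_eq_rhs,
      rule has_derivative_sum[OF dirder_has_derivative[OF assms]]) simp_all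

lemma dirder_divide:
  fixes f g :: "'a::real_normed_vector \<Rightarrow> real"
  assumes "f differentiable at z" "g differentiable at z" "g z \<noteq> 0"
  shows "dirder (\<lambda>z. f z / g z) v z = (dirder f v z * g z - f z * dirder g v z) / (g z)^2"
  by (rule dirder_eqI, rule has_derivative_eq_rhs,
      rule has_derivative_divide[OF dirder_has_derivative[OF assms(1)] dirder_has_derivative[OF assms(2)] assms(3)])
     (use assms(3) in \<open>auto simp: fun_eq_iff field_simps power2_eq_square\<close>)

lemma dirder_inverse:
  fixes f :: "'a::real_normed_vector \<Rightarrow> real"
  assumes "f differentiable at z" "f z \<noteq> 0"
  shows "dirder (\<lambda>z. inverse (f z)) v z = - (inverse (f z) ^ 2 * dirder f v z)"
proof -
  have "dirder (\<lambda>z. inverse (f z)) v z = dirder (\<lambda>z. 1 / f z) v z"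
    by (simp add: inverse_eq_divide)
  also have "\<dots> = (dirder (\<lambda>z. 1) v z * f z - 1 * dirder f v z) / (f z)^2"
    by (rule dirder_divide) (use assms in auto)
  finally show ?thesis using assms(2) by (simp add: dirder_const field_simps power2_eq_square)
qed

lemma dirder_ln:
  fixes f :: "'a::real_normed_vector \<Rightarrow> real"
  assumes "f differentiable at z" "f z > 0"
  shows "dirder (\<lambda>z. ln (f z)) v z = dirder f v z / f z"
  by (rule dirder_eqI, rule has_derivative_eq_rhs,
      rule has_derivative_ln[OF assms(2) dirder_has_derivative[OF assms(1)]]) (simp add: field_simps)

lemma dirder_sqrt:
  fixes f :: "'a::real_normed_vector \<Rightarrow> real"
  assumes "f differentiable at z" "f z > 0"
  shows "dirder (\<lambda>z. sqrt (f z)) v z = dirder f v z / (2 * sqrt (f z))"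
  by (rule dirder_eqI, rule has_derivative_eq_rhs,
      rule has_derivative_real_sqrt[OF assms(2) dirder_has_derivative[OF assms(1)]]) (simp add: field_simps)

lemma dirder_component:
  fixes f :: "'a::real_normed_vector \<Rightarrow> real^'n"
  assumes "f differentiable at z"
  shows "dirder (\<lambda>z. f z $ i) v z = dirder f v z $ i"
  by (rule dirder_eqI, rule has_derivative_eq_rhs,
      rule bounded_linear.has_derivative[OF bounded_linear_vec_nth dirder_has_derivative[OF assms]]) simp

section \<open>Smooth classes\<close>

fun Cn :: "'a::real_normed_vector set \<Rightarrow> nat \<Rightarrow> ('a \<Rightarrow> 'b::real_normed_vector) \<Rightarrow> bool" where
  "Cn S 0 f = (\<forall>z\<in>S. f differentiable at z)"
| "Cn S (Suc k) f = ((\<forall>z\<in>S. f differentiable at z) \<and> (\<forall>v. Cn S k (dirder f v)))"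

definition Cinf :: "'a::real_normed_vector set \<Rightarrow> ('a \<Rightarrow> 'b::real_normed_vector) \<Rightarrow> bool" where
  "Cinf S f \<longleftrightarrow> (\<forall>k. Cn S k f)"

lemma Cn_fold:
  "Cn S k f \<longleftrightarrow> (\<forall>vs. length vs \<le> k \<longrightarrow> (\<forall>z\<in>S. (fold (\<lambda>v g. dirder g v) vs f) differentiable (at z)))"
proof (induction k arbitrary: f)
  case 0
  then show ?case by auto
next
  case (Suc k)
  show ?case
  proof
    assume H: "Cn S (Suc k) f"
    show "\<forall>vs. length vs \<le> Suc k \<longrightarrow> (\<forall>z\<in>S. fold (\<lambda>v g. dirder g v) vs f differentiable at z)"
    proof (intro allI impI)
      fix vs :: "'a list" assume "length vs \<le> Suc k"
      then show "\<forall>z\<in>S. fold (\<lambda>v g. dirder g v) vs f differentiable at z"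
        using H Suc.IH by (cases vs) auto
    qed
  next
    assume H: "\<forall>vs. length vs \<le> Suc k \<longrightarrow> (\<forall>z\<in>S. fold (\<lambda>v g. dirder g v) vs f differentiable at z)"
    have "\<forall>z\<in>S. f differentiable at z" using H[rule_format, of "[]"] by simp
    moreover have "Cn S k (dirder f v)" for v
      unfolding Suc.IH using H[rule_format, of "v # _"] by auto
    ultimately show "Cn S (Suc k) f" by simp
  qed
qed

lemma smooth_on_Cinf: "smooth_on S f \<Longrightarrow> Cinf S f"
  unfolding smooth_on_def Cinf_def Cn_fold by blast

lemma Cn_diffble: "Cn S k f \<Longrightarrow> z \<in> S \<Longrightarrow> f differentiable at z"
  by (cases k) auto

lemma Cn_mono: "Cn S (Suc k) f \<Longrightarrow> Cn S k f"
proof (induction k arbitrary: f)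
  case 0 then show ?case by simp
next
  case (Suc k) then show ?case by (metis Cn.simps(2))
qed

lemma Cn_cong:
  assumes "open S" "Cn S k f" "\<And>z. z \<in> S \<Longrightarrow> f z = g z"
  shows "Cn S k g"
  using assms(2,3)
proof (induction k arbitrary: f g)
  case 0 then show ?case using diffble_local[OF assms(1)] by (metis Cn.simps(1))
next
  case (Suc k)
  have d: "\<forall>z\<in>S. g differentiable at z"
  proof
    fix z assume z: "z \<in> S"
    then have "f differentiable at z" using Suc.prems(1) by simp
    then show "g differentiable at z" using diffble_local[OF assms(1) z, of f g] Suc.prems by blast
  qed
  have "Cn S k (dirder g v)" for v
  proof -
    have "Cn S k (dirder f v)" using Suc.prems by simp
    moreover have "dirder f v z = dirder g v z" if "z \<in> S" for z
      using dirder_local[OF assms(1) that, of f g] Suc.prems that by simp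
    ultimately show ?thesis using Suc.IH by blast
  qed
  then show ?case using d by simp
qed

lemma Cn_const: "Cn S k (\<lambda>z. c)"
proof (induction k arbitrary: c)
  case 0 then show ?case by simp
next
  case (Suc k)
  have e: "dirder (\<lambda>z. c) v = (\<lambda>z. 0)" for v by (rule ext) (simp add: dirder_const)
  have "\<forall>v. Cn S k (dirder (\<lambda>z. c) v)"
  proof
    fix v show "Cn S k (dirder (\<lambda>z. c) v)" by (subst e) (rule Suc.IH)
  qed
  then show ?case by simp
qed

lemma Cn_add:
  fixes f g :: "'a::real_normed_vector \<Rightarrow> real"
  assumes "open S"
  shows "Cn S k f \<Longrightarrow> Cn S k g \<Longrightarrow> Cn S k (\<lambda>z. f z + g z)"
proof (induction k arbitrary: f g)
  case 0 then show ?case by auto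
next
  case (Suc k)
  have "Cn S k (dirder (\<lambda>z. f z + g z) v)" for v
  proof (rule Cn_cong[OF assms])
    show "Cn S k (\<lambda>z. dirder f v z + dirder g v z)" using Suc by simp
    show "dirder f v z + dirder g v z = dirder (\<lambda>z. f z + g z) v z" if "z \<in> S" for z
      using dirder_add[of f z g v] Suc.prems that by simp
  qed
  then show ?case using Suc.prems by auto
qed

lemma Cn_minus:
  fixes f :: "'a::real_normed_vector \<Rightarrow> real"
  assumes "open S"
  shows "Cn S k f \<Longrightarrow> Cn S k (\<lambda>z. - f z)"
proof (induction k arbitrary: f)
  case 0 then show ?case by auto
next
  case (Suc k)
  have "Cn S k (dirder (\<lambda>z. - f z) v)" for v
  proof (rule Cn_cong[OF assms])
    show "Cn S k (\<lambda>z. - dirder f v z)" using Suc by simp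
    show "- dirder f v z = dirder (\<lambda>z. - f z) v z" if "z \<in> S" for z
      using dirder_minus[of f z v] Suc.prems that by simp
  qed
  then show ?case using Suc.prems by auto
qed

lemma Cn_mult:
  fixes f g :: "'a::real_normed_vector \<Rightarrow> real"
  assumes "open S"
  shows "Cn S k f \<Longrightarrow> Cn S k g \<Longrightarrow> Cn S k (\<lambda>z. f z * g z)"
proof (induction k arbitrary: f g)
  case 0 then show ?case by auto
next
  case (Suc k)
  have "Cn S k (dirder (\<lambda>z. f z * g z) v)" for v
  proof (rule Cn_cong[OF assms])
    show "Cn S k (\<lambda>z. f z * dirder g v z + dirder f v z * g z)"
      using Suc Cn_mono Cn_add[OF assms] by (metis Cn.simps(2))
    show "f z * dirder g v z + dirder f v z * g z = dirder (\<lambda>z. f z * g z) v z" if "z \<in> S" for z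
      using dirder_mult[of f z g v] Suc.prems that by simp
  qed
  then show ?case using Suc.prems by auto
qed

lemma Cn_sum:
  fixes f :: "'i \<Rightarrow> 'a::real_normed_vector \<Rightarrow> real"
  assumes "open S" "finite A"
  shows "(\<And>i. i \<in> A \<Longrightarrow> Cn S k (f i)) \<Longrightarrow> Cn S k (\<lambda>z. \<Sum>i\<in>A. f i z)"
  using assms(2)
proof (induction A rule: finite_induct)
  case empty then show ?case using Cn_const[of S k 0] by simp
next
  case (insert x F)
  then show ?case using Cn_add[OF assms(1), of k "f x" "\<lambda>z. \<Sum>i\<in>F. f i z"] by simp
qed

lemma diffble_sqrt:
  fixes f :: "'a::real_normed_vector \<Rightarrow> real"
  shows "f differentiable at z \<Longrightarrow> f z > 0 \<Longrightarrow> (\<lambda>z. sqrt (f z)) differentiable at z"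
  using has_derivative_real_sqrt[OF _ dirder_has_derivative] differentiable_def by blast

lemma diffble_ln:
  fixes f :: "'a::real_normed_vector \<Rightarrow> real"
  shows "f differentiable at z \<Longrightarrow> f z > 0 \<Longrightarrow> (\<lambda>z. ln (f z)) differentiable at z"
  using has_derivative_ln[OF _ dirder_has_derivative] differentiable_def by blast

lemma diffble_component:
  fixes f :: "'a::real_normed_vector \<Rightarrow> real^'n"
  shows "f differentiable at z \<Longrightarrow> (\<lambda>z. f z $ i) differentiable at z"
  using bounded_linear.has_derivative[OF bounded_linear_vec_nth dirder_has_derivative] differentiable_def by blast

lemma Cn_inverse:
  fixes f :: "'a::real_normed_vector \<Rightarrow> real"
  assumes "open S"
  shows "Cn S k f \<Longrightarrow> (\<And>z. z \<in> S \<Longrightarrow> f z \<noteq> 0) \<Longrightarrow> Cn S k (\<lambda>z. inverse (f z))"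
proof (induction k arbitrary: f)
  case 0 then show ?case by auto
next
  case (Suc k)
  have "Cn S k (dirder (\<lambda>z. inverse (f z)) v)" for v
  proof (rule Cn_cong[OF assms])
    have "Cn S k (\<lambda>z. inverse (f z))" using Suc Cn_mono by blast
    then have "Cn S k (\<lambda>z. inverse (f z) * inverse (f z))" using Cn_mult[OF assms] by blast
    then have "Cn S k (\<lambda>z. inverse (f z) * inverse (f z) * dirder f v z)" using Cn_mult[OF assms] Suc.prems by auto
    then show "Cn S k (\<lambda>z. - (inverse (f z) * inverse (f z) * dirder f v z))" using Cn_minus[OF assms] by blast
    show "- (inverse (f z) * inverse (f z) * dirder f v z) = dirder (\<lambda>z. inverse (f z)) v z" if "z \<in> S" for z
      using dirder_inverse[of f z v] Suc.prems that by (auto simp: power2_eq_square)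
  qed
  then show ?case using Suc.prems by auto
qed

lemma Cn_ln:
  fixes f :: "'a::real_normed_vector \<Rightarrow> real"
  assumes "open S"
  shows "Cn S k f \<Longrightarrow> (\<And>z. z \<in> S \<Longrightarrow> f z > 0) \<Longrightarrow> Cn S k (\<lambda>z. ln (f z))"
proof (cases k)
  case 0
  then show "Cn S k f \<Longrightarrow> (\<And>z. z \<in> S \<Longrightarrow> f z > 0) \<Longrightarrow> Cn S k (\<lambda>z. ln (f z))" 
    by (auto intro!: diffble_ln)
next
  case (Suc m)
  assume H: "Cn S k f" "\<And>z. z \<in> S \<Longrightarrow> f z > 0"
  have "Cn S m (dirder (\<lambda>z. ln (f z)) v)" for v
  proof (rule Cn_cong[OF assms])
    have "Cn S m (\<lambda>z. inverse (f z))" using H Suc Cn_mono Cn_inverse[OF assms] by (metis less_irrefl)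
    then show "Cn S m (\<lambda>z. dirder f v z * inverse (f z))" using Cn_mult[OF assms] H Suc by auto
    show "dirder f v z * inverse (f z) = dirder (\<lambda>z. ln (f z)) v z" if "z \<in> S" for z
      using dirder_ln[of f z v] H Suc that by (auto simp: field_simps)
  qed
  then show ?thesis using H Suc by (auto intro!: diffble_ln)
qed

lemma Cn_sqrt:
  fixes f :: "'a::real_normed_vector \<Rightarrow> real"
  assumes "open S"
  shows "Cn S k f \<Longrightarrow> (\<And>z. z \<in> S \<Longrightarrow> f z > 0) \<Longrightarrow> Cn S k (\<lambda>z. sqrt (f z))"
proof (induction k arbitrary: f)
  case 0 then show ?case by (auto intro!: diffble_sqrt)
next
  case (Suc k)
  have "Cn S k (dirder (\<lambda>z. sqrt (f z)) v)" for v
  proof (rule Cn_cong[OF assms])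
    have "Cn S k (\<lambda>z. sqrt (f z))" using Suc Cn_mono by blast
    then have "Cn S k (\<lambda>z. inverse (sqrt (f z)))" using Cn_inverse[OF assms] Suc.prems by force
    then have "Cn S k (\<lambda>z. inverse (sqrt (f z)) * dirder f v z)" using Cn_mult[OF assms] Suc.prems by auto
    then show "Cn S k (\<lambda>z. (1/2) * (inverse (sqrt (f z)) * dirder f v z))" using Cn_mult[OF assms] Cn_const by blast
    show "(1/2) * (inverse (sqrt (f z)) * dirder f v z) = dirder (\<lambda>z. sqrt (f z)) v z" if "z \<in> S" for z
      using dirder_sqrt[of f z v] Suc.prems that by (auto simp: field_simps)
  qed
  then show ?case using Suc.prems by (auto intro!: diffble_sqrt)
qed

lemma Cn_component:
  fixes f :: "'a::real_normed_vector \<Rightarrow> real^'n"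
  assumes "open S"
  shows "Cn S k f \<Longrightarrow> Cn S k (\<lambda>z. f z $ i)"
proof (induction k arbitrary: f)
  case 0 then show ?case by (auto intro!: diffble_component)
next
  case (Suc k)
  have "Cn S k (dirder (\<lambda>z. f z $ i) v)" for v
  proof (rule Cn_cong[OF assms])
    show "Cn S k (\<lambda>z. dirder f v z $ i)" using Suc by auto
    show "dirder f v z $ i = dirder (\<lambda>z. f z $ i) v z" if "z \<in> S" for z
      using dirder_component[of f z i v] Suc.prems that by auto
  qed
  then show ?case using Suc.prems by (auto intro!: diffble_component)
qed

lemma Cinf_diffble: "Cinf S f \<Longrightarrow> z \<in> S \<Longrightarrow> f differentiable at z"
  unfolding Cinf_def using Cn_diffble by blast

lemma Cinf_dirder: "Cinf S f \<Longrightarrow> Cinf S (dirder f v)"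
  unfolding Cinf_def by (metis Cn.simps(2))

lemma Cinf_const: "Cinf S (\<lambda>z. c)"
  unfolding Cinf_def by (simp add: Cn_const)

lemma Cinf_add: "open S \<Longrightarrow> Cinf S f \<Longrightarrow> Cinf S g \<Longrightarrow> Cinf S (\<lambda>z. f z + g z :: real)"
  unfolding Cinf_def using Cn_add by blast

lemma Cinf_minus: "open S \<Longrightarrow> Cinf S f \<Longrightarrow> Cinf S (\<lambda>z. - f z :: real)"
  unfolding Cinf_def using Cn_minus by blast

lemma Cinf_mult: "open S \<Longrightarrow> Cinf S f \<Longrightarrow> Cinf S g \<Longrightarrow> Cinf S (\<lambda>z. f z * g z :: real)"
  unfolding Cinf_def using Cn_mult by blast

lemma Cinf_diff: "open S \<Longrightarrow> Cinf S f \<Longrightarrow> Cinf S g \<Longrightarrow> Cinf S (\<lambda>z. f z - g z :: real)"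
  using Cinf_add[of S f "\<lambda>z. - g z"] Cinf_minus[of S g] by simp

lemma Cinf_sum: "open S \<Longrightarrow> finite A \<Longrightarrow> (\<And>i. i \<in> A \<Longrightarrow> Cinf S (f i)) \<Longrightarrow> Cinf S (\<lambda>z. \<Sum>i\<in>A. f i z :: real)"
  unfolding Cinf_def using Cn_sum by blast

lemma Cinf_inverse: "open S \<Longrightarrow> Cinf S f \<Longrightarrow> (\<And>z. z \<in> S \<Longrightarrow> f z \<noteq> 0) \<Longrightarrow> Cinf S (\<lambda>z. inverse (f z) :: real)"
  unfolding Cinf_def using Cn_inverse by blast

lemma Cinf_divide: "open S \<Longrightarrow> Cinf S f \<Longrightarrow> Cinf S g \<Longrightarrow> (\<And>z. z \<in> S \<Longrightarrow> g z \<noteq> 0) \<Longrightarrow> Cinf S (\<lambda>z. f z / g z :: real)"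
  using Cinf_mult[of S f "\<lambda>z. inverse (g z)"] Cinf_inverse[of S g] by (simp add: divide_inverse)

lemma Cinf_ln: "open S \<Longrightarrow> Cinf S f \<Longrightarrow> (\<And>z. z \<in> S \<Longrightarrow> f z > 0) \<Longrightarrow> Cinf S (\<lambda>z. ln (f z) :: real)"
  unfolding Cinf_def using Cn_ln by blast

lemma Cinf_sqrt: "open S \<Longrightarrow> Cinf S f \<Longrightarrow> (\<And>z. z \<in> S \<Longrightarrow> f z > 0) \<Longrightarrow> Cinf S (\<lambda>z. sqrt (f z) :: real)"
  unfolding Cinf_def using Cn_sqrt by blast

lemma Cinf_component: "open S \<Longrightarrow> Cinf S f \<Longrightarrow> Cinf S (\<lambda>z. f z $ i :: real)"
  unfolding Cinf_def using Cn_component by blast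



lemma schwarz_aux:
  fixes f :: "'a::real_normed_vector \<Rightarrow> real"
  assumes X: "open X" "z \<in> X" and fd: "\<And>y. y \<in> X \<Longrightarrow> f differentiable at y"
    and psid: "dirder f v differentiable at z"
    and e: "e > 0"
  shows "\<exists>d>0. \<forall>h. 0 < h \<and> h < d \<longrightarrow>
     \<bar>(f (z + h *\<^sub>R v + h *\<^sub>R w) - f (z + h *\<^sub>R v) - f (z + h *\<^sub>R w) + f z) - h^2 * dirder (dirder f v) w z\<bar> \<le> e * h^2"
proof -
  define \<psi> where "\<psi> = dirder f v"
  define D where "D = (\<lambda>p. dirder \<psi> p z)"
  have hd: "(\<psi> has_derivative D) (at z)" unfolding D_def \<psi>_def by (rule dirder_has_derivative[OF psid])
  then have bl: "bounded_linear D" by (rule has_derivative_bounded_linear)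
  obtain r where r: "r > 0" "ball z r \<subseteq> X" using X openE by blast
  define M where "M = norm v + norm w + 1"
  have M: "M > 0" unfolding M_def by (simp add: add_nonneg_pos)
  define e' where "e' = e / (2 * M)"
  have e': "e' > 0" unfolding e'_def using e M by simp
  obtain d1 where d1: "d1 > 0" "\<And>y. norm (y - z) < d1 \<Longrightarrow> norm (\<psi> y - \<psi> z - D (y - z)) \<le> e' * norm (y - z)"
    using hd e' unfolding has_derivative_at_alt by blast
  define d where "d = min d1 r / M"
  have d: "d > 0" unfolding d_def using d1 r M by simp
  show ?thesis
  proof (intro exI[of _ d] conjI allI impI)
    show "d > 0" by (rule d)
    fix h :: real assume h: "0 < h \<and> h < d"
    have hM: "h * M < d1" "h * M < r"
      using h M unfolding d_def by (auto simp: field_simps)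
    have nrm: "norm (s *\<^sub>R v + c *\<^sub>R w) \<le> h * M" if "0 \<le> s" "s \<le> h" "0 \<le> c" "c \<le> h" for s c
    proof -
      have "norm (s *\<^sub>R v + c *\<^sub>R w) \<le> s * norm v + c * norm w"
        using norm_triangle_ineq[of "s *\<^sub>R v" "c *\<^sub>R w"] that by simp
      also have "\<dots> \<le> h * norm v + h * norm w"
        using that by (intro add_mono mult_right_mono) auto
      also have "\<dots> \<le> h * M" using h unfolding M_def by (simp add: algebra_simps)
      finally show ?thesis .
    qed
    have inX: "z + (s *\<^sub>R v + c *\<^sub>R w) \<in> X" if "0 \<le> s" "s \<le> h" "0 \<le> c" "c \<le> h" for s c
    proof -
      have "norm (s *\<^sub>R v + c *\<^sub>R w) < r" using nrm[OF that] hM by simp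
      then have "z + (s *\<^sub>R v + c *\<^sub>R w) \<in> ball z r" by (simp add: dist_norm norm_minus_commute add.commute)
      then show ?thesis using r by blast
    qed
    define g where "g = (\<lambda>s. f (z + s *\<^sub>R v + h *\<^sub>R w) - f (z + s *\<^sub>R v))"
    define g' where "g' = (\<lambda>s. \<psi> (z + s *\<^sub>R v + h *\<^sub>R w) - \<psi> (z + s *\<^sub>R v))"
    have gd: "(g has_real_derivative g' s) (at s)" if "0 \<le> s" "s \<le> h" for s
    proof -
      have chain: "((\<lambda>s. f (c + s *\<^sub>R v)) has_real_derivative \<psi> (c + s *\<^sub>R v)) (at s)"
        if "c + s *\<^sub>R v \<in> X" for c
      proof -
        have fh: "(f has_derivative (\<lambda>p. dirder f p (c + s *\<^sub>R v))) (at (c + s *\<^sub>R v))"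
          by (rule dirder_has_derivative[OF fd[OF that]])
        have lin: "((\<lambda>s. c + s *\<^sub>R v) has_derivative (\<lambda>t. t *\<^sub>R v)) (at s)"
          by (auto intro!: derivative_eq_intros)
        have "((\<lambda>s. f (c + s *\<^sub>R v)) has_derivative (\<lambda>t. dirder f (t *\<^sub>R v) (c + s *\<^sub>R v))) (at s)"
          using has_derivative_compose[OF lin fh] by (simp add: o_def)
        moreover have "dirder f (t *\<^sub>R v) (c + s *\<^sub>R v) = t * \<psi> (c + s *\<^sub>R v)" for t
          using linear_cmul[OF bounded_linear.linear[OF has_derivative_bounded_linear[OF fh]], of t v]
          unfolding \<psi>_def by simp
        ultimately show ?thesis unfolding has_field_derivative_def
          by (simp add: mult.commute[of _ "\<psi> (c + s *\<^sub>R v)"])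
      qed
      have a1: "z + h *\<^sub>R w + s *\<^sub>R v \<in> X" using inX[OF that, of h] h by (simp add: algebra_simps)
      have a2: "z + s *\<^sub>R v \<in> X" using inX[OF that, of 0] h by simp
      have "((\<lambda>s. f (z + h *\<^sub>R w + s *\<^sub>R v) - f (z + s *\<^sub>R v)) has_real_derivative
              \<psi> (z + h *\<^sub>R w + s *\<^sub>R v) - \<psi> (z + s *\<^sub>R v)) (at s)"
        by (rule DERIV_diff[OF chain[OF a1] chain[OF a2]])
      then show ?thesis unfolding g_def g'_def by (simp add: algebra_simps)
    qed
    obtain \<theta> where th: "0 < \<theta>" "\<theta> < h" "g h - g 0 = (h - 0) * g' \<theta>"
      using MVT2[of 0 h g g'] gd h by auto
    have \<Delta>: "f (z + h *\<^sub>R v + h *\<^sub>R w) - f (z + h *\<^sub>R v) - f (z + h *\<^sub>R w) + f z = h * g' \<theta>"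
      using th(3) unfolding g_def by simp
    define p1 where "p1 = \<theta> *\<^sub>R v + h *\<^sub>R w"
    define p2 where "p2 = \<theta> *\<^sub>R v + 0 *\<^sub>R w"
    have np1: "norm p1 \<le> h * M" unfolding p1_def using nrm[of \<theta> h] th h by simp
    have np2: "norm p2 \<le> h * M" unfolding p2_def using nrm[of \<theta> 0] th h by simp
    have r1: "norm (\<psi> (z + p1) - \<psi> z - D p1) \<le> e' * (h * M)"
      using d1(2)[of "z + p1"] np1 hM e' by (smt (verit, best) add_diff_cancel_left' mult_left_mono)
    have r2: "norm (\<psi> (z + p2) - \<psi> z - D p2) \<le> e' * (h * M)"
      using d1(2)[of "z + p2"] np2 hM e' by (smt (verit, best) add_diff_cancel_left' mult_left_mono)
    have Dlin: "D p1 - D p2 = h * D w"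
      unfolding p1_def p2_def
      using linear_cmul[OF bounded_linear.linear[OF bl]] linear_add[OF bounded_linear.linear[OF bl]]
      by simp
    have g'eq: "g' \<theta> = \<psi> (z + p1) - \<psi> (z + p2)"
      unfolding g'_def p1_def p2_def by (simp add: algebra_simps)
    have "\<bar>g' \<theta> - h * D w\<bar> \<le> 2 * e' * (h * M)"
      using r1 r2 g'eq Dlin by simp
    then have "\<bar>h * g' \<theta> - h^2 * D w\<bar> \<le> h * (2 * e' * (h * M))"
      using h by (simp add: power2_eq_square abs_mult right_diff_distrib[symmetric] mult.assoc mult_left_mono)
    also have "h * (2 * e' * (h * M)) = e * h^2"
      unfolding e'_def using M by (simp add: field_simps power2_eq_square)
    finally show "\<bar>(f (z + h *\<^sub>R v + h *\<^sub>R w) - f (z + h *\<^sub>R v) - f (z + h *\<^sub>R w) + f z) - h^2 * dirder (dirder f v) w z\<bar> \<le> e * h^2"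
      unfolding \<Delta> D_def \<psi>_def .
  qed
qed

lemma schwarz:
  fixes f :: "'a::real_normed_vector \<Rightarrow> real"
  assumes X: "open X" "z \<in> X" and fd: "\<And>y. y \<in> X \<Longrightarrow> f differentiable at y"
    and "dirder f v differentiable at z" "dirder f w differentiable at z"
  shows "dirder (dirder f v) w z = dirder (dirder f w) v z"
proof (rule ccontr)
  define A where "A = dirder (dirder f v) w z"
  define B where "B = dirder (dirder f w) v z"
  assume "dirder (dirder f v) w z \<noteq> dirder (dirder f w) v z"
  then have AB: "\<bar>A - B\<bar> > 0" unfolding A_def B_def by simp
  define e where "e = \<bar>A - B\<bar> / 4"
  have e: "e > 0" using AB unfolding e_def by simp
  obtain d1 where d1: "d1 > 0" "\<forall>h. 0 < h \<and> h < d1 \<longrightarrow>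
     \<bar>(f (z + h *\<^sub>R v + h *\<^sub>R w) - f (z + h *\<^sub>R v) - f (z + h *\<^sub>R w) + f z) - h^2 * A\<bar> \<le> e * h^2"
    using schwarz_aux[OF X fd assms(4) e, of w] unfolding A_def by blast
  obtain d2 where d2: "d2 > 0" "\<forall>h. 0 < h \<and> h < d2 \<longrightarrow>
     \<bar>(f (z + h *\<^sub>R w + h *\<^sub>R v) - f (z + h *\<^sub>R w) - f (z + h *\<^sub>R v) + f z) - h^2 * B\<bar> \<le> e * h^2"
    using schwarz_aux[OF X fd assms(5) e, of v] unfolding B_def by blast
  define h where "h = min d1 d2 / 2"
  have h: "0 < h" "h < d1" "h < d2" unfolding h_def using d1 d2 by auto
  have 1: "\<bar>(f (z + h *\<^sub>R v + h *\<^sub>R w) - f (z + h *\<^sub>R v) - f (z + h *\<^sub>R w) + f z) - h^2 * A\<bar> \<le> e * h^2"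
    using d1 h by blast
  have 2: "\<bar>(f (z + h *\<^sub>R v + h *\<^sub>R w) - f (z + h *\<^sub>R v) - f (z + h *\<^sub>R w) + f z) - h^2 * B\<bar> \<le> e * h^2"
    using d2 h by (simp add: algebra_simps)
  have "\<bar>h^2 * A - h^2 * B\<bar> \<le> 2 * e * h^2"
    using 1 2 by linarith
  moreover have "\<bar>h^2 * A - h^2 * B\<bar> = h^2 * \<bar>A - B\<bar>"
    by (simp add: abs_mult right_diff_distrib[symmetric])
  ultimately have "h^2 * \<bar>A - B\<bar> \<le> 2 * e * h^2" by simp
  then have "\<bar>A - B\<bar> \<le> 2 * e" using h by (simp add: mult.commute)
  then show False using AB unfolding e_def by simp
qed



lemma integral_shift:
  fixes h :: "real^'n \<Rightarrow> real"
  assumes "continuous_on UNIV h"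
  shows "integral (cbox p q) (\<lambda>x. h (x + c)) = integral (cbox (p + c) (q + c)) h"
proof -
  have "(h has_integral integral (cbox (p + c) (q + c)) h) (cbox (p + c) (q + c))"
    using assms by (intro integrable_integral integrable_continuous) (auto intro: continuous_on_subset)
  from has_integral_affinity[OF this, of 1 c]
  have "((\<lambda>x. h (x + c)) has_integral integral (cbox (p + c) (q + c)) h)
          ((\<lambda>x. x + - c) ` cbox (p + c) (q + c))" by simp
  moreover have "(\<lambda>x. x + - c) ` cbox (p + c) (q + c) = cbox p q"
    using cbox_translation[of "-c" "p + c" "q + c"] by (simp add: add.commute)
  ultimately show ?thesis by (simp add: integral_unique)
qed

lemma cell_split_le:
  fixes s :: real
  shows "unit_cell \<inter> {x::real^'n. x \<bullet> axis j 1 \<le> s} = cbox 0 (\<chi> i. if i = j then min 1 s else 1)"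
  unfolding unit_cell_def set_eq_iff
  by (simp add: mem_box_cart inner_axis) (intro allI iffI; auto split: if_splits)

lemma cell_split_ge:
  fixes s :: real
  shows "unit_cell \<inter> {x::real^'n. x \<bullet> axis j 1 \<ge> s} = cbox (\<chi> i. if i = j then max 0 s else 0) (\<chi> i. 1)"
  unfolding unit_cell_def set_eq_iff
  by (simp add: mem_box_cart inner_axis) (intro allI iffI; auto split: if_splits)

lemma periodic_shift_01:
  fixes h :: "real^'n \<Rightarrow> real"
  assumes cont: "continuous_on UNIV h" and per: "\<And>x. h (x + axis j 1) = h x"
    and s: "0 \<le> s" "s \<le> 1"
  shows "integral unit_cell (\<lambda>x. h (x + s *\<^sub>R axis j 1)) = integral unit_cell h"
proof -
  let ?g = "\<lambda>x. h (x + s *\<^sub>R axis j 1)"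
  have cg: "continuous_on UNIV ?g" by (intro continuous_on_compose2[OF cont]) (auto intro!: continuous_intros)
  have intg: "?g integrable_on unit_cell" unfolding unit_cell_def
    by (rule integrable_continuous) (rule continuous_on_subset[OF cg], simp)
  have inth: "h integrable_on unit_cell" unfolding unit_cell_def
    by (rule integrable_continuous) (rule continuous_on_subset[OF cont], simp)
  have B: "axis j (1::real) \<in> Basis" by simp
  have "integral unit_cell ?g = integral (unit_cell \<inter> {x. x \<bullet> axis j 1 \<le> 1 - s}) ?g
      + integral (unit_cell \<inter> {x. x \<bullet> axis j 1 \<ge> 1 - s}) ?g"
    using integral_split[OF intg[unfolded unit_cell_def] B] unfolding unit_cell_def by blast
  also have "integral (unit_cell \<inter> {x. x \<bullet> axis j 1 \<le> 1 - s}) ?g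
      = integral (cbox (\<chi> i. if i = j then max 0 s else 0) (\<chi> i. 1)) h"
  proof -
    have "integral (unit_cell \<inter> {x. x \<bullet> axis j 1 \<le> 1 - s}) ?g
        = integral (cbox (0 + s *\<^sub>R axis j 1) ((\<chi> i. if i = j then min 1 (1 - s) else 1) + s *\<^sub>R axis j 1)) h"
      unfolding cell_split_le by (rule integral_shift[OF cont])
    also have "(0::real^'n) + s *\<^sub>R axis j 1 = (\<chi> i. if i = j then max 0 s else 0)"
      using s by (simp add: vec_eq_iff axis_def)
    also have "(\<chi> i. if i = j then min 1 (1 - s) else 1) + s *\<^sub>R axis j 1 = (\<chi> i. (1::real))"
      using s by (simp add: vec_eq_iff axis_def)
    finally show ?thesis .
  qed
  also have "integral (unit_cell \<inter> {x. x \<bullet> axis j 1 \<ge> 1 - s}) ?g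
      = integral (cbox 0 (\<chi> i. if i = j then min 1 s else 1)) h"
  proof -
    have e: "?g x = h (x + (s - 1) *\<^sub>R axis j 1)" for x
      using per[of "x + (s - 1) *\<^sub>R axis j 1"] by (simp add: algebra_simps)
    have "integral (unit_cell \<inter> {x. x \<bullet> axis j 1 \<ge> 1 - s}) ?g
        = integral (cbox (\<chi> i. if i = j then max 0 (1 - s) else 0) (\<chi> i. 1)) (\<lambda>x. h (x + (s - 1) *\<^sub>R axis j 1))"
      unfolding cell_split_ge e by simp
    also have "\<dots> = integral (cbox ((\<chi> i. if i = j then max 0 (1 - s) else 0) + (s - 1) *\<^sub>R axis j 1)
                        ((\<chi> i. 1) + (s - 1) *\<^sub>R axis j 1)) h"
      by (rule integral_shift[OF cont])
    also have "(\<chi> i. if i = j then max 0 (1 - s) else 0) + (s - 1) *\<^sub>R axis j 1 = (0::real^'n)"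
      using s by (simp add: vec_eq_iff axis_def)
    also have "(\<chi> i. 1) + (s - 1) *\<^sub>R axis j 1 = (\<chi> i. if i = j then min 1 s else (1::real))"
      using s by (simp add: vec_eq_iff axis_def)
    finally show ?thesis .
  qed
  also have "integral (cbox (\<chi> i. if i = j then max 0 s else 0) (\<chi> i. 1)) h
      + integral (cbox 0 (\<chi> i. if i = j then min 1 s else 1)) h = integral unit_cell h"
    using integral_split[OF inth[unfolded unit_cell_def] B, of s]
    unfolding cell_split_le[symmetric] cell_split_ge[symmetric] unfolding unit_cell_def by simp
  finally show ?thesis .
qed

lemma periodic_shift:
  fixes h :: "real^'n \<Rightarrow> real"
  assumes cont: "continuous_on UNIV h" and per: "\<And>x. h (x + axis j 1) = h x"
    and s: "-1 \<le> s" "s \<le> 1"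
  shows "integral unit_cell (\<lambda>x. h (x + s *\<^sub>R axis j 1)) = integral unit_cell h"
proof (cases "s \<ge> 0")
  case True then show ?thesis using periodic_shift_01[OF cont per] s by simp
next
  case False
  have "h (x + s *\<^sub>R axis j 1) = h (x + (s + 1) *\<^sub>R axis j 1)" for x
    using per[of "x + s *\<^sub>R axis j 1"] by (simp add: algebra_simps)
  then show ?thesis using periodic_shift_01[OF cont per, of "s + 1"] s False by simp
qed

lemma line_deriv:
  assumes "h differentiable at (c + s *\<^sub>R v)"
  shows "((\<lambda>s. h (c + s *\<^sub>R v)) has_real_derivative dirder h v (c + s *\<^sub>R v)) (at s)"
proof -
  have fh: "(h has_derivative (\<lambda>p. dirder h p (c + s *\<^sub>R v))) (at (c + s *\<^sub>R v))"
    by (rule dirder_has_derivative[OF assms])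
  have lin: "((\<lambda>s. c + s *\<^sub>R v) has_derivative (\<lambda>t. t *\<^sub>R v)) (at s)"
    by (auto intro!: derivative_eq_intros)
  have "((\<lambda>s. h (c + s *\<^sub>R v)) has_derivative (\<lambda>t. dirder h (t *\<^sub>R v) (c + s *\<^sub>R v))) (at s)"
    using has_derivative_compose[OF lin fh] by (simp add: o_def)
  moreover have "dirder h (t *\<^sub>R v) (c + s *\<^sub>R v) = t * dirder h v (c + s *\<^sub>R v)" for t
    using linear_cmul[OF bounded_linear.linear[OF has_derivative_bounded_linear[OF fh]], of t v] by simp
  ultimately show ?thesis unfolding has_field_derivative_def
    by (simp add: mult.commute[of _ "dirder h v (c + s *\<^sub>R v)"])
qed

lemma integral_deriv_zero:
  fixes h :: "real^'n \<Rightarrow> real"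
  assumes d: "\<And>y. h differentiable at y"
    and c: "continuous_on UNIV (dirder h (axis j 1))"
    and per: "\<And>x. h (x + axis j 1) = h x"
  shows "integral unit_cell (dirder h (axis j 1)) = 0"
proof -
  let ?e = "axis j (1::real) :: real^'n"
  have cont: "continuous_on UNIV h"
    using d differentiable_imp_continuous_within continuous_at_imp_continuous_on by blast
  define U where "U = {-1<..<1::real}"
  have lr: "((\<lambda>s. integral (cbox 0 (\<chi> i. 1)) (\<lambda>x. h (x + s *\<^sub>R ?e))) has_field_derivative
       integral (cbox 0 (\<chi> i. 1)) (\<lambda>x. dirder h ?e (x + 0 *\<^sub>R ?e))) (at 0 within U)"
  proof (rule leibniz_rule_field_derivative)
    fix s :: real and x :: "real^'n"
    show "((\<lambda>s. h (x + s *\<^sub>R ?e)) has_field_derivative dirder h ?e (x + s *\<^sub>R ?e)) (at s within U)"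
      using line_deriv[of h x s ?e, OF d] by (rule has_field_derivative_at_within)
  next
    fix s :: real
    show "(\<lambda>x. h (x + s *\<^sub>R ?e)) integrable_on cbox 0 (\<chi> i. 1)"
      by (rule integrable_continuous, rule continuous_on_compose2[OF cont]) (auto intro!: continuous_intros)
  next
    have "continuous_on (U \<times> cbox 0 (\<chi> i. 1)) (\<lambda>p. dirder h ?e (snd p + fst p *\<^sub>R ?e))"
      by (rule continuous_on_compose2[OF c]) (auto intro!: continuous_intros)
    then show "continuous_on (U \<times> cbox 0 (\<chi> i. 1)) (\<lambda>(s, x). dirder h ?e (x + s *\<^sub>R ?e))"
      by (simp add: split_def)
  qed (auto simp: U_def)
  then have lr': "((\<lambda>s. integral unit_cell (\<lambda>x. h (x + s *\<^sub>R ?e))) has_field_derivative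
       integral unit_cell (dirder h ?e)) (at 0)"
    unfolding unit_cell_def U_def by (simp add: at_within_open[of 0 "{-1<..<1}"])
  have "((\<lambda>s. integral unit_cell (\<lambda>x. h (x + s *\<^sub>R ?e))) has_field_derivative 0) (at 0)"
  proof (rule has_field_derivative_transform_within_open[OF DERIV_const[of "integral unit_cell h"] open_greaterThanLessThan])
    show "(0::real) \<in> {-1<..<1}" by simp
    show "integral unit_cell h = integral unit_cell (\<lambda>x. h (x + s *\<^sub>R ?e))" if "s \<in> {-1<..<1}" for s
      using periodic_shift[OF cont per, of s] that by simp
  qed
  then show ?thesis using DERIV_unique[OF lr'] by simp
qed



lemma slice_deriv:
  fixes F :: "real \<times> 'a::real_normed_vector \<Rightarrow> 'b::real_normed_vector"
  assumes "F differentiable at (t, x)"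
  shows "((\<lambda>y. F (t, y)) has_derivative (\<lambda>v. dirder F (0, v) (t, x))) (at x)"
proof -
  have p: "((\<lambda>y. (t, y)) has_derivative (\<lambda>v. (0, v))) (at x)"
    by (auto intro!: derivative_eq_intros)
  show ?thesis using has_derivative_compose[OF p dirder_has_derivative[OF assms]] by (simp add: o_def)
qed

lemma slice_dirder:
  fixes F :: "real \<times> 'a::real_normed_vector \<Rightarrow> 'b::real_normed_vector"
  assumes "F differentiable at (t, x)"
  shows "dirder (\<lambda>y. F (t, y)) v x = dirder F (0, v) (t, x)"
  by (rule dirder_eqI[OF slice_deriv[OF assms]])

lemma slice_diffble:
  fixes F :: "real \<times> 'a::real_normed_vector \<Rightarrow> 'b::real_normed_vector"
  assumes "F differentiable at (t, x)"
  shows "(\<lambda>y. F (t, y)) differentiable at x"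
  using slice_deriv[OF assms] differentiable_def by blast

lemma pd_joint:
  fixes F :: "real \<times> (real^'n) \<Rightarrow> real"
  assumes "F differentiable at (t, x)" "\<And>y. f y = F (t, y)"
  shows "pd i f x = dirder F (0, axis i 1) (t, x)"
proof -
  have e: "(t, x) + s *\<^sub>R (0, axis i 1) = (t, x + s *\<^sub>R axis i 1)" for s :: real by simp
  have "((\<lambda>s. F ((t, x) + s *\<^sub>R (0, axis i 1))) has_real_derivative dirder F (0, axis i 1) ((t, x) + 0 *\<^sub>R (0, axis i 1))) (at 0)"
    by (rule line_deriv) (simp add: assms(1))
  then have "((\<lambda>s. f (x + s *\<^sub>R axis i 1)) has_real_derivative dirder F (0, axis i 1) (t, x)) (at 0)"
    unfolding e assms(2) by simp
  then show ?thesis unfolding pd_def by (rule DERIV_imp_deriv)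
qed

lemma dt_joint:
  fixes F :: "real \<times> (real^'n) \<Rightarrow> real"
  assumes "open I" "t \<in> I" "F differentiable at (t, x)" "\<And>s y. s \<in> I \<Longrightarrow> g s y = F (s, y)"
  shows "dt g t x = dirder F (1, 0) (t, x)"
proof -
  have e: "(0, x) + s *\<^sub>R (1, 0) = (s, x)" for s :: real by simp
  have "((\<lambda>s. F ((0, x) + s *\<^sub>R (1, 0))) has_real_derivative dirder F (1, 0) ((0, x) + t *\<^sub>R (1, 0))) (at t)"
    by (rule line_deriv) (simp add: assms(3))
  then have "((\<lambda>s. F (s, x)) has_real_derivative dirder F (1, 0) (t, x)) (at t)"
    unfolding e by simp
  then have "((\<lambda>s. g s x) has_real_derivative dirder F (1, 0) (t, x)) (at t)"
    by (rule has_field_derivative_transform_within_open[OF _ assms(1,2)]) (simp add: assms(4))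
  then show ?thesis unfolding dt_def by (rule DERIV_imp_deriv)
qed

lemma Cinf_slice_cont:
  fixes F :: "real \<times> 'a::real_normed_vector \<Rightarrow> 'b::real_normed_vector"
  assumes "Cinf (I \<times> UNIV) F" "t \<in> I"
  shows "continuous_on A (\<lambda>x. F (t, x))"
proof -
  have "continuous (at x) (\<lambda>x. F (t, x))" for x
    using slice_diffble[OF Cinf_diffble[OF assms(1)], of t x] assms(2) differentiable_imp_continuous_within[of _ x UNIV] by auto
  then show ?thesis by (simp add: continuous_at_imp_continuous_on)
qed

definition jper :: "real set \<Rightarrow> (real \<times> (real^'n) \<Rightarrow> 'b) \<Rightarrow> bool" where
  "jper I F \<longleftrightarrow> (\<forall>t\<in>I. \<forall>x i. F (t, x + axis i 1) = F (t, x))"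

lemma jper_const: "jper I (\<lambda>z. c)" by (simp add: jper_def)
lemma jper_add: "jper I F \<Longrightarrow> jper I G \<Longrightarrow> jper I (\<lambda>z. F z + G z)" by (simp add: jper_def)
lemma jper_diff: "jper I F \<Longrightarrow> jper I G \<Longrightarrow> jper I (\<lambda>z. F z - G z)" by (simp add: jper_def)
lemma jper_minus: "jper I F \<Longrightarrow> jper I (\<lambda>z. - F z)" by (simp add: jper_def)
lemma jper_mult: "jper I F \<Longrightarrow> jper I G \<Longrightarrow> jper I (\<lambda>z. F z * G z :: real)" by (simp add: jper_def)
lemma jper_divide: "jper I F \<Longrightarrow> jper I G \<Longrightarrow> jper I (\<lambda>z. F z / G z :: real)" by (simp add: jper_def)
lemma jper_ln: "jper I F \<Longrightarrow> jper I (\<lambda>z. ln (F z))" by (simp add: jper_def)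
lemma jper_sqrt: "jper I F \<Longrightarrow> jper I (\<lambda>z. sqrt (F z))" by (simp add: jper_def)
lemma jper_sum: "(\<And>i. i \<in> A \<Longrightarrow> jper I (F i)) \<Longrightarrow> jper I (\<lambda>z. \<Sum>i\<in>A. F i z :: real)" by (simp add: jper_def)
lemma jper_component: "jper I F \<Longrightarrow> jper I (\<lambda>z. F z $ i)" by (simp add: jper_def)

lemma jper_dirder:
  fixes F :: "real \<times> (real^'n) \<Rightarrow> real"
  assumes I: "open I" and d: "\<And>z. z \<in> I \<times> UNIV \<Longrightarrow> F differentiable at z" and p: "jper I F"
  shows "jper I (dirder F v)"
  unfolding jper_def
proof (intro ballI allI)
  fix t x i assume t: "t \<in> I"
  define q where "q = ((0::real), axis i (1::real) :: real^'n)"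
  have S: "open (I \<times> (UNIV :: (real^'n) set))" using I by (simp add: open_Times)
  have eq: "F y = F (y + q)" if "y \<in> I \<times> UNIV" for y
    using p that unfolding jper_def q_def by (cases y) auto
  have "(t, x) + q = (t, x + axis i 1)" unfolding q_def by simp
  have tr: "((\<lambda>y. y + q) has_derivative (\<lambda>v. v)) (at (t, x))" by (auto intro!: derivative_eq_intros)
  have "((\<lambda>y. F (y + q)) has_derivative (\<lambda>v. dirder F v ((t, x) + q))) (at (t, x))"
    using has_derivative_compose[OF tr dirder_has_derivative[OF d]] t unfolding q_def by (simp add: o_def)
  then have "dirder (\<lambda>y. F (y + q)) v (t, x) = dirder F v ((t, x) + q)" by (rule dirder_eqI)
  moreover have "dirder F v (t, x) = dirder (\<lambda>y. F (y + q)) v (t, x)"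
    by (rule dirder_local[OF S _ eq]) (use t d in auto)
  ultimately show "dirder F v (t, x + axis i 1) = dirder F v (t, x)"
    unfolding q_def by simp
qed

lemma ibp:
  fixes F G :: "real \<times> (real^'n) \<Rightarrow> real"
  assumes I: "open I" "t \<in> I" and c: "Cinf (I \<times> UNIV) F" "Cinf (I \<times> UNIV) G"
    and p: "jper I F" "jper I G"
  shows "integral unit_cell (\<lambda>x. G (t, x) * dirder F (0, axis j 1) (t, x))
       = - integral unit_cell (\<lambda>x. dirder G (0, axis j 1) (t, x) * F (t, x))"
proof -
  have S: "open (I \<times> (UNIV :: (real^'n) set))" using I by (simp add: open_Times)
  define H where "H = (\<lambda>z. G z * F z)"
  have cH: "Cinf (I \<times> UNIV) H" unfolding H_def by (rule Cinf_mult[OF S c(2,1)])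
  define h where "h = (\<lambda>y. H (t, y))"
  have dh: "h differentiable at y" for y
    unfolding h_def by (rule slice_diffble, rule Cinf_diffble[OF cH]) (use I in simp)
  have dd: "dirder h (axis j 1) = (\<lambda>y. dirder H (0, axis j 1) (t, y))"
    unfolding h_def by (rule ext, rule slice_dirder, rule Cinf_diffble[OF cH]) (use I in simp)
  have "integral unit_cell (dirder h (axis j 1)) = 0"
  proof (rule integral_deriv_zero[OF dh])
    show "continuous_on UNIV (dirder h (axis j 1))"
      unfolding dd by (rule Cinf_slice_cont[OF Cinf_dirder[OF cH] I(2)])
    show "h (x + axis j 1) = h x" for x
      using p I unfolding h_def H_def jper_def by simp
  qed
  moreover have "dirder H (0, axis j 1) (t, y) = G (t, y) * dirder F (0, axis j 1) (t, y) + dirder G (0, axis j 1) (t, y) * F (t, y)" for y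
    unfolding H_def by (rule dirder_mult) (use I Cinf_diffble[OF c(1)] Cinf_diffble[OF c(2)] in auto)
  ultimately have z: "integral unit_cell (\<lambda>y. G (t, y) * dirder F (0, axis j 1) (t, y) + dirder G (0, axis j 1) (t, y) * F (t, y)) = 0"
    unfolding dd by simp
  have i1: "(\<lambda>y. G (t, y) * dirder F (0, axis j 1) (t, y)) integrable_on unit_cell"
    unfolding unit_cell_def
    by (intro integrable_continuous continuous_intros Cinf_slice_cont[OF _ I(2)] Cinf_dirder c)
  have i2: "(\<lambda>y. dirder G (0, axis j 1) (t, y) * F (t, y)) integrable_on unit_cell"
    unfolding unit_cell_def
    by (intro integrable_continuous continuous_intros Cinf_slice_cont[OF _ I(2)] Cinf_dirder c)
  show ?thesis using z integral_add[OF i1 i2] by simp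
qed



abbreviation Pd :: "'n \<Rightarrow> (real \<times> (real^'n) \<Rightarrow> real) \<Rightarrow> real \<times> (real^'n) \<Rightarrow> real" where
  "Pd i F \<equiv> dirder F (0, axis i 1)"

lemma dirder_localC:
  assumes "open S" "z \<in> S" "Cinf S f" "\<And>y. y \<in> S \<Longrightarrow> f y = g y"
  shows "dirder f v z = dirder g v z"
  by (rule dirder_local[OF assms(1,2) assms(4) Cinf_diffble[OF assms(3,2)]])

lemma quantum:
  fixes R :: "real \<times> (real^'n) \<Rightarrow> real"
  assumes S: "open S" and cR: "Cinf S R" and pos: "\<And>z. z \<in> S \<Longrightarrow> R z > 0" and z: "z \<in> S"
  shows "2 * R z * Pd i (\<lambda>z. (\<Sum>j\<in>UNIV. Pd j (Pd j (\<lambda>z. sqrt (R z))) z) / sqrt (R z)) z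
       = (\<Sum>j\<in>UNIV. Pd j (\<lambda>z. R z * Pd j (Pd i (\<lambda>z. ln (R z))) z) z)"
proof -
  define s where "s = (\<lambda>z. sqrt (R z))"
  define L where "L = (\<lambda>z. ln (R z))"
  have cs: "Cinf S s" unfolding s_def by (rule Cinf_sqrt[OF S cR pos])
  have spos: "y \<in> S \<Longrightarrow> s y > 0" for y unfolding s_def using pos by simp
  have cL: "Cinf S L" unfolding L_def by (rule Cinf_ln[OF S cR pos])
  have Rs: "y \<in> S \<Longrightarrow> R y = s y * s y" for y unfolding s_def using pos[of y] by simp
  note dS = Cinf_diffble[of S]
  note cl = Cinf_dirder[of S] Cinf_mult[OF S] Cinf_add[OF S] Cinf_diff[OF S] Cinf_const Cinf_sum[OF S]
      Cinf_minus[OF S]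
  note rules = dirder_mult dirder_add dirder_diff dirder_cmult dirder_const dirder_sum dirder_minus
  have q1: "Pd i L y = 2 * Pd i s y / s y" if y: "y \<in> S" for i y
  proof -
    have "Pd i L y = Pd i R y / R y" unfolding L_def by (rule dirder_ln) (use y pos dS[OF cR] in auto)
    also have "Pd i R y = Pd i (\<lambda>y. s y * s y) y"
      by (rule dirder_local[OF S y]) (use Rs dS[OF cR] y in auto)
    also have "\<dots> = 2 * s y * Pd i s y" using y cs by (simp add: rules dS cl)
    finally show ?thesis using Rs[OF y] spos[OF y] by (simp add: field_simps)
  qed
  have q2: "R y * Pd j (Pd i L) y = 2 * (s y * Pd j (Pd i s) y - Pd i s y * Pd j s y)" if y: "y \<in> S" for j y
  proof -
    have "Pd j (Pd i L) y = Pd j (\<lambda>y. 2 * Pd i s y / s y) y"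
    proof (rule dirder_local[OF S y])
      show "Pd i L y' = 2 * Pd i s y' / s y'" if "y' \<in> S" for y' using q1[OF that] by simp
      show "Pd i L differentiable at y" by (rule dS[OF Cinf_dirder[OF cL] y])
    qed
    also have "\<dots> = 2 * ((Pd j (Pd i s) y * s y - Pd i s y * Pd j s y) / (s y)^2)"
      using y cs spos[OF y]
      by (simp add: dirder_divide dirder_cmult dS cl times_divide_eq_right[symmetric] del: times_divide_eq_right)
    finally show ?thesis using Rs[OF y] spos[OF y] by (simp add: field_simps power2_eq_square)
  qed
  have q3: "Pd j (\<lambda>z. R z * Pd j (Pd i L) z) z = 2 * (s z * Pd j (Pd j (Pd i s)) z - Pd i s z * Pd j (Pd j s) z)" for j
  proof -
    have "Pd j (\<lambda>z. R z * Pd j (Pd i L) z) z = Pd j (\<lambda>y. 2 * (s y * Pd j (Pd i s) y - Pd i s y * Pd j s y)) z"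
      by (rule dirder_localC[OF S z]) (simp_all add: q2 cl cL cR)
    also have "\<dots> = 2 * (s z * Pd j (Pd j (Pd i s)) z - Pd i s z * Pd j (Pd j s) z)"
      using z cs by (simp add: rules dS cl algebra_simps)
    finally show ?thesis .
  qed
  have q5: "Pd i (Pd j (Pd j s)) z = Pd j (Pd j (Pd i s)) z" for j
  proof -
    have "Pd i (Pd j (Pd j s)) z = Pd j (Pd i (Pd j s)) z"
      by (rule schwarz[OF S z]) (simp_all add: dS cl cs z)
    also have "\<dots> = Pd j (Pd j (Pd i s)) z"
    proof (rule dirder_local[OF S z])
      show "Pd i (Pd j s) y = Pd j (Pd i s) y" if "y \<in> S" for y
        by (rule schwarz[OF S that]) (simp_all add: dS cl cs that)
    qed (simp_all add: dS cl cs z)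
    finally show ?thesis .
  qed
  have q4: "Pd i (\<lambda>z. (\<Sum>j\<in>UNIV. Pd j (Pd j s) z) / s z) z
      = ((\<Sum>j\<in>UNIV. Pd i (Pd j (Pd j s)) z) * s z - (\<Sum>j\<in>UNIV. Pd j (Pd j s) z) * Pd i s z) / (s z)^2"
    using z cs spos[OF z] by (simp add: dirder_divide dirder_sum dS cl)
  have "2 * R z * Pd i (\<lambda>z. (\<Sum>j\<in>UNIV. Pd j (Pd j s) z) / s z) z
      = 2 * ((\<Sum>j\<in>UNIV. Pd j (Pd j (Pd i s)) z) * s z - (\<Sum>j\<in>UNIV. Pd j (Pd j s) z) * Pd i s z)"
    unfolding q4 q5 using Rs[OF z] spos[OF z] by (simp add: field_simps power2_eq_square)
  also have "\<dots> = (\<Sum>j\<in>UNIV. Pd j (\<lambda>z. R z * Pd j (Pd i L) z) z)"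
    unfolding q3 by (simp add: sum_distrib_left sum_distrib_right sum_subtractf algebra_simps)
  finally show ?thesis unfolding s_def L_def .
qed



lemma alg_term:
  fixes r \<mu> \<nu> \<kappa> lam bij bji Hij uui uuj li wwi :: real
  assumes k: "\<mu>^2 - 2*\<nu>*\<mu> + \<kappa>^2 = 0" and lam: "lam = \<nu> - \<mu>" and w: "wwi = uui + \<mu> * li"
  shows "bij * (- (r * uui * uuj) + 2 * \<nu> * (r * (((bij - \<mu> * Hij) + (bji - \<mu> * Hij)) / 2)) + \<kappa>^2 * (r * Hij)
            - \<mu> * (r * (bji - \<mu> * Hij) + r * li * uuj)) + wwi * bij * (r * uuj)
       = 2 * lam * (r * ((bij + bji) / 2)^2) + \<mu> * (r * bij^2) + lam * r * (bij^2 - bji^2) / 2"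
proof -
  have k2: "\<kappa>^2 = 2*\<nu>*\<mu> - \<mu>^2" using k by simp
  show ?thesis unfolding k2 lam w by (simp add: field_simps power2_eq_square)
qed

lemma alg:
  fixes r \<mu> \<nu> \<kappa> lam :: real and l uu ww :: "'n::finite \<Rightarrow> real" and a b H :: "'n \<Rightarrow> 'n \<Rightarrow> real"
  assumes k: "\<mu>^2 - 2*\<nu>*\<mu> + \<kappa>^2 = 0" and lam: "lam = \<nu> - \<mu>"
    and w: "\<And>i. ww i = uu i + \<mu> * l i" and ab: "\<And>i j. a i j = b i j - \<mu> * H i j"
    and Hs: "\<And>i j. H i j = H j i"
  shows "(\<Sum>i\<in>UNIV. \<Sum>j\<in>UNIV. b i j * (- (r * uu i * uu j) + 2 * \<nu> * (r * ((a i j + a j i) / 2)) + \<kappa>^2 * (r * H i j)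
            - \<mu> * (r * a j i + r * l i * uu j)))
       + (\<Sum>j\<in>UNIV. (\<Sum>i\<in>UNIV. ww i * b i j) * (r * uu j))
     = 2 * lam * (r * (\<Sum>i\<in>UNIV. \<Sum>j\<in>UNIV. ((b i j + b j i) / 2)^2)) + \<mu> * (r * (\<Sum>i\<in>UNIV. \<Sum>j\<in>UNIV. (b i j)^2))"
proof -
  define T where "T i j = b i j * (- (r * uu i * uu j) + 2 * \<nu> * (r * ((a i j + a j i) / 2)) + \<kappa>^2 * (r * H i j)
            - \<mu> * (r * a j i + r * l i * uu j)) + ww i * b i j * (r * uu j)" for i j
  have t: "T i j = 2 * lam * (r * ((b i j + b j i) / 2)^2) + \<mu> * (r * (b i j)^2) + lam * r * ((b i j)^2 - (b j i)^2) / 2" for i j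
    unfolding T_def ab Hs[of j i] by (rule alg_term[OF k lam w])
  have sw: "(\<Sum>i\<in>UNIV. \<Sum>j\<in>UNIV. (b i j)^2 - (b j i)^2) = (0::real)"
    by (simp add: sum_subtractf) (rule sum.swap)
  have "(\<Sum>j\<in>UNIV. (\<Sum>i\<in>UNIV. ww i * b i j) * (r * uu j)) = (\<Sum>i\<in>UNIV. \<Sum>j\<in>UNIV. ww i * b i j * (r * uu j))"
    by (simp add: sum_distrib_right) (rule sum.swap)
  then have "LHS = (\<Sum>i\<in>UNIV. \<Sum>j\<in>UNIV. T i j)" if "LHS = (\<Sum>i\<in>UNIV. \<Sum>j\<in>UNIV. b i j * (- (r * uu i * uu j) + 2 * \<nu> * (r * ((a i j + a j i) / 2)) + \<kappa>^2 * (r * H i j)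
            - \<mu> * (r * a j i + r * l i * uu j)))
       + (\<Sum>j\<in>UNIV. (\<Sum>i\<in>UNIV. ww i * b i j) * (r * uu j))" for LHS
    using that unfolding T_def by (simp add: sum.distrib)
  moreover have "(\<Sum>i\<in>UNIV. \<Sum>j\<in>UNIV. T i j)
     = 2 * lam * (r * (\<Sum>i\<in>UNIV. \<Sum>j\<in>UNIV. ((b i j + b j i) / 2)^2)) + \<mu> * (r * (\<Sum>i\<in>UNIV. \<Sum>j\<in>UNIV. (b i j)^2))
       + lam * r / 2 * (\<Sum>i\<in>UNIV. \<Sum>j\<in>UNIV. (b i j)^2 - (b j i)^2)"
    unfolding t by (simp add: sum.distrib sum_distrib_left)
  ultimately show ?thesis using sw by simp
qed

lemma time_deriv:
  fixes F :: "real \<times> (real^'n) \<Rightarrow> real"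
  assumes "F differentiable at (s, x)"
  shows "((\<lambda>s. F (s, x)) has_real_derivative dirder F (1, 0) (s, x)) (at s)"
proof -
  have e: "(0, x) + s *\<^sub>R (1, 0) = (s, x)" for s :: real by simp
  have "((\<lambda>s. F ((0, x) + s *\<^sub>R (1, 0))) has_real_derivative dirder F (1, 0) ((0, x) + s *\<^sub>R (1, 0))) (at s)"
    by (rule line_deriv) (simp add: assms)
  then show ?thesis unfolding e by simp
qed

lemma Cinf_cont_on:
  fixes F :: "'a::real_normed_vector \<Rightarrow> real"
  assumes "Cinf S F" "A \<subseteq> S"
  shows "continuous_on A F"
proof -
  have "continuous (at z) F" if "z \<in> A" for z
    using Cinf_diffble[OF assms(1)] that assms(2) differentiable_imp_continuous_within by blast
  then show ?thesis by (simp add: continuous_at_imp_continuous_on)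
qed

lemma jperC:
  fixes F :: "real \<times> (real^'n) \<Rightarrow> real"
  shows "open I \<Longrightarrow> Cinf (I \<times> UNIV) F \<Longrightarrow> jper I F \<Longrightarrow> jper I (dirder F v)"
  by (rule jper_dirder) (auto intro: Cinf_diffble)

lemma Cinf_divc: "open S \<Longrightarrow> Cinf S f \<Longrightarrow> Cinf S (\<lambda>z. f z / c :: real)"
  using Cinf_mult[of S f "\<lambda>z. 1 / c"] Cinf_const[of S "1/c"] by simp

lemma Cinf_pow2: "open S \<Longrightarrow> Cinf S f \<Longrightarrow> Cinf S (\<lambda>z. (f z)^2 :: real)"
  using Cinf_mult[of S f f] by (simp add: power2_eq_square)

lemma dirder_divc:
  fixes f :: "'a::real_normed_vector \<Rightarrow> real"
  assumes "f differentiable at z"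
  shows "dirder (\<lambda>z. f z / c) v z = dirder f v z / c"
  using dirder_cmult[OF assms, of "1/c" v] by simp

theorem lemmaA3:
  fixes \<rho> :: "real \<Rightarrow> real^'n \<Rightarrow> real"
    and u :: "real \<Rightarrow> real^'n \<Rightarrow> real^'n"
    and \<nu> \<kappa> \<mu> lam a b :: real
  assumes dim: "CARD('n) = 2 \<or> CARD('n) = 3"
    and visc: "\<nu> > \<kappa>" "\<kappa> > 0"
    and mu_def: "\<mu> = \<nu> - sqrt (\<nu>\<^sup>2 - \<kappa>\<^sup>2)"
    and lam_def: "lam = sqrt (\<nu>\<^sup>2 - \<kappa>\<^sup>2)"
    and ab: "a < b"
    and smooth_rho: "smooth_on ({a<..<b} \<times> UNIV) (\<lambda>z. \<rho> (fst z) (snd z))"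
    and smooth_u: "smooth_on ({a<..<b} \<times> UNIV) (\<lambda>z. u (fst z) (snd z))"
    and per_rho: "\<And>t. t \<in> {a<..<b} \<Longrightarrow> periodic_field (\<rho> t)"
    and per_u: "\<And>t. t \<in> {a<..<b} \<Longrightarrow> periodic_field (u t)"
    and pos: "\<And>t x. t \<in> {a<..<b} \<Longrightarrow> \<rho> t x > 0"
    and mass: "\<And>t x. t \<in> {a<..<b} \<Longrightarrow>
        dt \<rho> t x + (\<Sum>j\<in>UNIV. pd j (\<lambda>y. \<rho> t y * u t y $ j) x) = 0"
    and momentum: "\<And>t x i. t \<in> {a<..<b} \<Longrightarrow>
        dt (\<lambda>s y. \<rho> s y * u s y $ i) t x
        + (\<Sum>j\<in>UNIV. pd j (\<lambda>y. \<rho> t y * u t y $ i * u t y $ j) x)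
        - 2 * \<nu> * (\<Sum>j\<in>UNIV. pd j (\<lambda>y. \<rho> t y * symgrad (u t) i j y) x)
        = 2 * \<kappa>\<^sup>2 * \<rho> t x * pd i (\<lambda>y. lap (\<lambda>z. sqrt (\<rho> t z)) y / sqrt (\<rho> t y)) x"
  defines "w \<equiv> \<lambda>t y. u t y + \<mu> *\<^sub>R grad (\<lambda>z. ln (\<rho> t z)) y"
  shows "\<forall>t\<in>{a<..<b}.
     ((\<lambda>s. integral unit_cell (\<lambda>x. \<rho> s x * (norm (w s x))\<^sup>2 / 2)) has_real_derivative
        - (2 * lam * integral unit_cell (\<lambda>x. \<rho> t x * (\<Sum>i\<in>UNIV. \<Sum>j\<in>UNIV. (symgrad (w t) i j x)\<^sup>2))
           + \<mu> * integral unit_cell (\<lambda>x. \<rho> t x * (\<Sum>i\<in>UNIV. \<Sum>j\<in>UNIV. (pd j (\<lambda>y. w t y $ i) x)\<^sup>2))))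
       (at t)"
proof
  fix t0 assume t0': "t0 \<in> {a<..<b}"
  define I where "I = {a<..<b}"
  have t0: "t0 \<in> I" using t0' unfolding I_def .
  have oI: "open I" unfolding I_def by simp
  define S where "S = I \<times> (UNIV :: (real^'n) set)"
  have oS: "open S" unfolding S_def using oI by (simp add: open_Times)
  have inS: "(s, x) \<in> S \<longleftrightarrow> s \<in> I" for s x unfolding S_def by simp
  define R where "R = (\<lambda>z. \<rho> (fst z) (snd z))"
  define Uv where "Uv = (\<lambda>z. u (fst z) (snd z))"
  define U where "U = (\<lambda>i z. Uv z $ i)"
  have cR: "Cinf S R" unfolding R_def S_def I_def by (rule smooth_on_Cinf[OF smooth_rho])
  have cUv: "Cinf S Uv" unfolding Uv_def S_def I_def by (rule smooth_on_Cinf[OF smooth_u])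
  have cU: "Cinf S (U i)" for i unfolding U_def by (rule Cinf_component[OF oS cUv])
  have posR: "R z > 0" if "z \<in> S" for z using pos that unfolding R_def S_def I_def by (cases z) auto
  have pR: "jper I R" using per_rho unfolding jper_def R_def periodic_field_def I_def by simp
  have pU: "jper I (U i)" for i using per_u unfolding jper_def U_def Uv_def periodic_field_def I_def by simp
  define L where "L = (\<lambda>z. ln (R z))"
  define Sq where "Sq = (\<lambda>z. sqrt (R z))"
  define Q where "Q = (\<lambda>z. (\<Sum>j\<in>UNIV. Pd j (Pd j Sq) z) / Sq z)"
  define W where "W = (\<lambda>i z. U i z + \<mu> * Pd i L z)"
  define DU where "DU = (\<lambda>i j z. (Pd j (U i) z + Pd i (U j) z) / 2)"
  have cL: "Cinf S L" unfolding L_def by (rule Cinf_ln[OF oS cR posR])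
  have cSq: "Cinf S Sq" unfolding Sq_def by (rule Cinf_sqrt[OF oS cR posR])
  have posSq: "z \<in> S \<Longrightarrow> Sq z > 0" for z unfolding Sq_def using posR by simp
  note dS = Cinf_diffble[of S]
  note cl = Cinf_dirder[of S] Cinf_mult[OF oS] Cinf_add[OF oS] Cinf_diff[OF oS] Cinf_const Cinf_sum[OF oS]
      Cinf_minus[OF oS] Cinf_divc[OF oS]
  note rules = dirder_mult dirder_add dirder_diff dirder_cmult dirder_const dirder_sum dirder_minus dirder_divc
  have nzSq: "z \<in> S \<Longrightarrow> Sq z \<noteq> 0" for z using posSq[of z] by simp
  have cQ: "Cinf S Q" unfolding Q_def by (rule Cinf_divide[OF oS]) (simp_all add: cl cSq nzSq)
  have cW: "Cinf S (W i)" for i unfolding W_def by (simp add: cl cU cL)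
  have cDU: "Cinf S (DU i j)" for i j unfolding DU_def by (simp add: cl cU)
  have jd: "jper I F \<Longrightarrow> Cinf S F \<Longrightarrow> jper I (dirder F v)" for F :: "real \<times> (real^'n) \<Rightarrow> real" and v
    using jperC[OF oI] unfolding S_def by blast
  note jl = jper_const jper_add jper_diff jper_minus jper_mult jper_divide jper_ln jper_sqrt jper_sum jd
  have pL: "jper I L" unfolding L_def by (simp add: jl pR)
  have pW: "jper I (W i)" for i unfolding W_def by (simp add: jl pU pL cL)

  have cv_w: "w s x $ i = W i (s, x)" if "s \<in> I" for s x i
  proof -
    have "pd i (\<lambda>z. ln (\<rho> s z)) x = Pd i L (s, x)"
      by (rule pd_joint[OF dS[OF cL]]) (simp_all add: L_def R_def inS that)
    then show ?thesis unfolding w_def W_def U_def Uv_def grad_def by simp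
  qed
  have cv_pdw: "pd j (\<lambda>y. w s y $ i) x = Pd j (W i) (s, x)" if "s \<in> I" for s x i j
    by (rule pd_joint[OF dS[OF cW]]) (simp_all add: cv_w that inS)
  have cv_sym: "symgrad (w s) i j x = (Pd j (W i) (s, x) + Pd i (W j) (s, x)) / 2" if "s \<in> I" for s x i j
    unfolding symgrad_def using cv_pdw[OF that] by simp
  have cv_norm: "(norm (w s x))\<^sup>2 = (\<Sum>i\<in>UNIV. W i (s, x) * W i (s, x))" if "s \<in> I" for s x
    by (simp add: power2_norm_eq_inner inner_vec_def cv_w[OF that])
  define N where "N = (\<lambda>z. (1/2) * (\<Sum>i\<in>UNIV. W i z * W i z))"
  define E where "E = (\<lambda>z. (1/2) * (R z * (\<Sum>i\<in>UNIV. W i z * W i z)))"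
  have cN: "Cinf S N" unfolding N_def by (simp add: cl cW)
  have pN: "jper I N" unfolding N_def by (simp add: jl pW)
  have cE: "Cinf S E" unfolding E_def by (simp add: cl cW cR)
  have Eeq: "\<rho> s x * (norm (w s x))\<^sup>2 / 2 = E (s, x)" if "s \<in> I" for s x
    by (simp add: cv_norm that E_def R_def)
  have lb: "((\<lambda>s. integral unit_cell (\<lambda>x. E (s, x))) has_field_derivative
              integral unit_cell (\<lambda>x. dirder E (1, 0) (t0, x))) (at t0)"
  proof -
    have "((\<lambda>s. integral (cbox 0 (\<chi> i. 1)) (\<lambda>x. E (s, x))) has_field_derivative
              integral (cbox 0 (\<chi> i. 1)) (\<lambda>x. dirder E (1, 0) (t0, x))) (at t0 within I)"
    proof (rule leibniz_rule_field_derivative)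
      fix s :: real and x :: "real^'n" assume s: "s \<in> I"
      show "((\<lambda>s. E (s, x)) has_field_derivative dirder E (1, 0) (s, x)) (at s within I)"
        by (rule has_field_derivative_at_within, rule time_deriv, rule dS[OF cE]) (simp add: inS s)
    next
      fix s assume s: "s \<in> I"
      show "(\<lambda>x. E (s, x)) integrable_on cbox 0 (\<chi> i. 1)"
        by (rule integrable_continuous, rule Cinf_slice_cont[OF cE[unfolded S_def] s])
    next
      have "continuous_on (I \<times> cbox 0 (\<chi> i. 1)) (dirder E (1, 0))"
        by (rule Cinf_cont_on[OF Cinf_dirder[OF cE]]) (auto simp: S_def)
      then show "continuous_on (I \<times> cbox 0 (\<chi> i. 1)) (\<lambda>(s, x). dirder E (1, 0) (s, x))"
        by (simp add: split_def)
    qed (use t0 in \<open>auto simp: I_def\<close>)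
    then show ?thesis unfolding unit_cell_def using at_within_open[OF t0 oI] by simp
  qed
  have deriv1: "((\<lambda>s. integral unit_cell (\<lambda>x. \<rho> s x * (norm (w s x))\<^sup>2 / 2)) has_real_derivative
              integral unit_cell (\<lambda>x. dirder E (1, 0) (t0, x))) (at t0)"
    by (rule has_field_derivative_transform_within_open[OF lb oI t0]) (simp add: Eeq)
  have key: "integral unit_cell (\<lambda>x. dirder E (1, 0) (t0, x)) =
        - (2 * lam * integral unit_cell (\<lambda>x. \<rho> t0 x * (\<Sum>i\<in>UNIV. \<Sum>j\<in>UNIV. (symgrad (w t0) i j x)\<^sup>2))
           + \<mu> * integral unit_cell (\<lambda>x. \<rho> t0 x * (\<Sum>i\<in>UNIV. \<Sum>j\<in>UNIV. (pd j (\<lambda>y. w t0 y $ i) x)\<^sup>2)))"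
  proof -
    define RU where "RU = (\<lambda>j z. R z * U j z)"
    define A1 where "A1 = (\<lambda>i j z. R z * U i z * U j z)"
    define A2 where "A2 = (\<lambda>i j z. R z * DU i j z)"
    define A3 where "A3 = (\<lambda>i j z. R z * Pd j (Pd i L) z)"
    define A4 where "A4 = (\<lambda>i j. Pd i (RU j))"
    define X where "X = (\<lambda>i j z. - A1 i j z + 2 * \<nu> * A2 i j z + \<kappa>\<^sup>2 * A3 i j z - \<mu> * A4 i j z)"
    have cRU: "Cinf S (RU j)" for j unfolding RU_def by (simp add: cl cR cU)
    have cA1: "Cinf S (A1 i j)" for i j unfolding A1_def by (simp add: cl cR cU)
    have cA2: "Cinf S (A2 i j)" for i j unfolding A2_def by (simp add: cl cR cDU)
    have cA3: "Cinf S (A3 i j)" for i j unfolding A3_def by (simp add: cl cR cL)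
    have cA4: "Cinf S (A4 i j)" for i j unfolding A4_def by (simp add: cl cRU)
    have cX: "Cinf S (X i j)" for i j unfolding X_def by (simp add: cl cA1 cA2 cA3 cA4)
    have pRU: "jper I (RU j)" for j unfolding RU_def by (simp add: jl pR pU)
    have pDU: "jper I (DU i j)" for i j unfolding DU_def by (simp add: jl pU cU)
    have pX: "jper I (X i j)" for i j
      unfolding X_def A1_def A2_def A3_def A4_def by (simp add: jl pR pU pDU pL pRU cL cRU cl)
    have dSI: "F differentiable at (s, x)" if "Cinf S F" "s \<in> I" for F :: "real \<times> (real^'n) \<Rightarrow> real" and s x
      using dS[OF that(1)] that(2) inS by blast
    have mass_j: "dirder R (1, 0) z = - (\<Sum>j\<in>UNIV. Pd j (RU j) z)" if "z \<in> S" for z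
    proof -
      obtain s x where z: "z = (s, x)" by (cases z)
      have s: "s \<in> I" using that z inS by simp
      have e1: "dt \<rho> s x = dirder R (1, 0) (s, x)"
        by (rule dt_joint[OF oI s dSI[OF cR s]]) (simp add: R_def)
      have e2: "pd j (\<lambda>y. \<rho> s y * u s y $ j) x = Pd j (RU j) (s, x)" for j
        by (rule pd_joint[OF dSI[OF cRU s]]) (simp add: RU_def R_def U_def Uv_def)
      have "dirder R (1, 0) (s, x) + (\<Sum>j\<in>UNIV. Pd j (RU j) (s, x)) = 0"
        using mass[of s x] s unfolding e1 e2 I_def by simp
      then show ?thesis unfolding z by linarith
    qed
    have mom_j: "dirder (RU i) (1, 0) z = - (\<Sum>j\<in>UNIV. Pd j (A1 i j) z) + 2 * \<nu> * (\<Sum>j\<in>UNIV. Pd j (A2 i j) z)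
        + 2 * \<kappa>\<^sup>2 * R z * Pd i Q z" if "z \<in> S" for i z
    proof -
      obtain s x where z: "z = (s, x)" by (cases z)
      have s: "s \<in> I" using that z inS by simp
      have e1: "dt (\<lambda>s y. \<rho> s y * u s y $ i) s x = dirder (RU i) (1, 0) (s, x)"
        by (rule dt_joint[OF oI s dSI[OF cRU s]]) (simp add: RU_def R_def U_def Uv_def)
      have e2: "pd j (\<lambda>y. \<rho> s y * u s y $ i * u s y $ j) x = Pd j (A1 i j) (s, x)" for j
        by (rule pd_joint[OF dSI[OF cA1 s]]) (simp add: A1_def R_def U_def Uv_def)
      have pu: "pd j (\<lambda>y. u s y $ i) y = Pd j (U i) (s, y)" for i j y
        by (rule pd_joint[OF dSI[OF cU s]]) (simp add: U_def Uv_def)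
      have su: "symgrad (u s) i j y = DU i j (s, y)" for j y
        unfolding symgrad_def DU_def pu by simp
      have e3: "pd j (\<lambda>y. \<rho> s y * symgrad (u s) i j y) x = Pd j (A2 i j) (s, x)" for j
        by (rule pd_joint[OF dSI[OF cA2 s]]) (simp add: A2_def R_def su)
      have sq: "pd j (\<lambda>z. sqrt (\<rho> s z)) = (\<lambda>y. Pd j Sq (s, y))" for j
        by (rule ext, rule pd_joint[OF dSI[OF cSq s]]) (simp add: Sq_def R_def)
      have lp: "lap (\<lambda>z. sqrt (\<rho> s z)) y = (\<Sum>j\<in>UNIV. Pd j (Pd j Sq) (s, y))" for y
      proof -
        have "pd j (\<lambda>y. Pd j Sq (s, y)) y = Pd j (Pd j Sq) (s, y)" for j
          by (rule pd_joint[OF dSI[OF Cinf_dirder[OF cSq] s]]) simp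
        then show ?thesis unfolding lap_def sq by simp
      qed
      have e4: "pd i (\<lambda>y. lap (\<lambda>z. sqrt (\<rho> s z)) y / sqrt (\<rho> s y)) x = Pd i Q (s, x)"
        by (rule pd_joint[OF dSI[OF cQ s]]) (simp add: Q_def lp Sq_def R_def)
      have "dirder (RU i) (1, 0) (s, x) + (\<Sum>j\<in>UNIV. Pd j (A1 i j) (s, x))
          - 2 * \<nu> * (\<Sum>j\<in>UNIV. Pd j (A2 i j) (s, x)) = 2 * \<kappa>\<^sup>2 * R (s, x) * Pd i Q (s, x)"
        using momentum[of s i x] s unfolding e1 e2 e3 e4 I_def by (simp add: R_def)
      then show ?thesis unfolding z by linarith
    qed
    have PdRL: "Pd i R y = R y * Pd i L y" if "y \<in> S" for i y
      using dirder_ln[OF dS[OF cR that] posR[OF that], of "(0, axis i 1)"] posR[OF that]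
      unfolding L_def by (simp add: field_simps)
    have P2: "dirder (\<lambda>z. R z * W i z) (1, 0) z = dirder (RU i) (1, 0) z + \<mu> * dirder (Pd i R) (1, 0) z"
      if "z \<in> S" for i z
    proof -
      have "dirder (\<lambda>z. R z * W i z) (1, 0) z = dirder (\<lambda>z. RU i z + \<mu> * Pd i R z) (1, 0) z"
        by (rule dirder_localC[OF oS that]) (simp add: cl cR cW, simp add: W_def RU_def PdRL algebra_simps)
      also have "\<dots> = dirder (RU i) (1, 0) z + \<mu> * dirder (Pd i R) (1, 0) z"
        using that by (simp add: rules dS cl cRU cR)
      finally show ?thesis .
    qed
    have P3: "dirder (Pd i R) (1, 0) z = Pd i (dirder R (1, 0)) z" if "z \<in> S" for i z
      by (rule schwarz[OF oS that]) (simp_all add: dS cl cR that)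
    have P4: "Pd i (dirder R (1, 0)) z = - (\<Sum>j\<in>UNIV. Pd j (A4 i j) z)" if "z \<in> S" for i z
    proof -
      have sw: "Pd i (Pd j (RU j)) z = Pd j (A4 i j) z" for j
        unfolding A4_def by (rule schwarz[OF oS that]) (simp_all add: dS cl cRU that)
      have "Pd i (dirder R (1, 0)) z = Pd i (\<lambda>y. - (\<Sum>j\<in>UNIV. Pd j (RU j) y)) z"
        by (rule dirder_localC[OF oS that]) (simp_all add: cl cR mass_j)
      also have "\<dots> = - (\<Sum>j\<in>UNIV. Pd i (Pd j (RU j)) z)"
        using that by (simp add: rules dS cl cRU)
      finally show ?thesis by (simp add: sw)
    qed
    have P6: "2 * R z * Pd i Q z = (\<Sum>j\<in>UNIV. Pd j (A3 i j) z)" if "z \<in> S" for i z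
      using quantum[OF oS cR posR that, of i] unfolding A3_def Q_def Sq_def L_def .
    have P7: "dirder (\<lambda>z. R z * W i z) (1, 0) z = (\<Sum>j\<in>UNIV. Pd j (X i j) z)" if "z \<in> S" for i z
    proof -
      have ex: "Pd j (X i j) z = - Pd j (A1 i j) z + 2 * \<nu> * Pd j (A2 i j) z + \<kappa>\<^sup>2 * Pd j (A3 i j) z
                 - \<mu> * Pd j (A4 i j) z" for j
        unfolding X_def using that by (simp add: rules dS cl cA1 cA2 cA3 cA4)
      have "dirder (\<lambda>z. R z * W i z) (1, 0) z = dirder (RU i) (1, 0) z + \<mu> * Pd i (dirder R (1, 0)) z"
        using P2[OF that] P3[OF that] by simp
      also have "\<dots> = - (\<Sum>j\<in>UNIV. Pd j (A1 i j) z) + 2 * \<nu> * (\<Sum>j\<in>UNIV. Pd j (A2 i j) z)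
        + \<kappa>\<^sup>2 * (2 * R z * Pd i Q z) - \<mu> * (\<Sum>j\<in>UNIV. Pd j (A4 i j) z)"
        using mom_j[OF that] P4[OF that] by (simp add: algebra_simps)
      also have "\<dots> = (\<Sum>j\<in>UNIV. Pd j (X i j) z)"
        unfolding P6[OF that] ex by (simp add: sum.distrib sum_subtractf sum_negf sum_distrib_left)
      finally show ?thesis .
    qed
    have P9: "dirder E (1, 0) z = (\<Sum>i\<in>UNIV. \<Sum>j\<in>UNIV. W i z * Pd j (X i j) z) + (\<Sum>j\<in>UNIV. N z * Pd j (RU j) z)"
      if "z \<in> S" for z
    proof -
      have e: "dirder E (1, 0) z = (1/2) * (R z * (\<Sum>i\<in>UNIV. W i z * dirder (W i) (1, 0) z + dirder (W i) (1, 0) z * W i z)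
           + dirder R (1, 0) z * (\<Sum>i\<in>UNIV. W i z * W i z))"
        unfolding E_def using that by (simp add: rules dS cl cR cW)
      have e2: "dirder (\<lambda>z. R z * W i z) (1, 0) z = R z * dirder (W i) (1, 0) z + dirder R (1, 0) z * W i z" for i
        using that by (simp add: rules dS cl cR cW)
      have e3: "(\<Sum>j\<in>UNIV. W i z * Pd j (X i j) z) = W i z * (R z * dirder (W i) (1, 0) z + dirder R (1, 0) z * W i z)" for i
        using P7[OF that, of i] e2[of i] by (simp add: sum_distrib_left)
      have e4: "(\<Sum>j\<in>UNIV. N z * Pd j (RU j) z) = - N z * dirder R (1, 0) z"
        by (simp add: mass_j[OF that] sum_distrib_left sum_negf)
      show ?thesis unfolding e e3 e4
        by (simp add: N_def sum.distrib sum_distrib_left sum_distrib_right algebra_simps)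
    qed
    have z0: "(t0, x) \<in> S" for x using t0 inS by simp
    have intS: "(\<lambda>x. G (t0, x)) integrable_on unit_cell" if "Cinf S G" for G :: "real \<times> (real^'n) \<Rightarrow> real"
      unfolding unit_cell_def by (rule integrable_continuous, rule Cinf_slice_cont[OF that[unfolded S_def] t0])
    have isum: "integral unit_cell (\<lambda>x. \<Sum>i\<in>UNIV. f i x) = (\<Sum>i\<in>UNIV. integral unit_cell (f i))"
      if "\<And>i. f i integrable_on unit_cell" for f :: "'n \<Rightarrow> real^'n \<Rightarrow> real"
      by (rule integral_sum) (auto intro: that)
    define G1 where "G1 = (\<lambda>i j z. W i z * Pd j (X i j) z)"
    define G2 where "G2 = (\<lambda>j z. N z * Pd j (RU j) z)"
    define K1 where "K1 = (\<lambda>i j z. Pd j (W i) z * X i j z)"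
    define K2 where "K2 = (\<lambda>j z. Pd j N z * RU j z)"
    define F1 where "F1 = (\<lambda>z. R z * (\<Sum>i\<in>UNIV. \<Sum>j\<in>UNIV. ((Pd j (W i) z + Pd i (W j) z) / 2)\<^sup>2))"
    define F2 where "F2 = (\<lambda>z. R z * (\<Sum>i\<in>UNIV. \<Sum>j\<in>UNIV. (Pd j (W i) z)\<^sup>2))"
    have cG1: "Cinf S (G1 i j)" for i j unfolding G1_def by (simp add: cl cW cX)
    have cG2: "Cinf S (G2 j)" for j unfolding G2_def by (simp add: cl cN cRU)
    have cK1: "Cinf S (K1 i j)" for i j unfolding K1_def by (simp add: cl cW cX)
    have cK2: "Cinf S (K2 j)" for j unfolding K2_def by (simp add: cl cN cRU)
    have cF1: "Cinf S F1" unfolding F1_def by (simp add: cl cW cR Cinf_pow2[OF oS])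
    have cF2: "Cinf S F2" unfolding F2_def by (simp add: cl cW cR Cinf_pow2[OF oS])
    have iG1: "(\<lambda>x. G1 i j (t0, x)) integrable_on unit_cell" for i j by (rule intS[OF cG1])
    have iG2: "(\<lambda>x. G2 j (t0, x)) integrable_on unit_cell" for j by (rule intS[OF cG2])
    have iK1: "(\<lambda>x. K1 i j (t0, x)) integrable_on unit_cell" for i j by (rule intS[OF cK1])
    have iK2: "(\<lambda>x. K2 j (t0, x)) integrable_on unit_cell" for j by (rule intS[OF cK2])
    have iG1s: "(\<lambda>x. \<Sum>j\<in>UNIV. G1 i j (t0, x)) integrable_on unit_cell" for i
      using intS[of "\<lambda>z. \<Sum>j\<in>UNIV. G1 i j z"] by (simp add: cl cG1)
    have iK1s: "(\<lambda>x. \<Sum>j\<in>UNIV. K1 i j (t0, x)) integrable_on unit_cell" for i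
      using intS[of "\<lambda>z. \<Sum>j\<in>UNIV. K1 i j z"] by (simp add: cl cK1)
    have iG1ss: "(\<lambda>x. \<Sum>i\<in>UNIV. \<Sum>j\<in>UNIV. G1 i j (t0, x)) integrable_on unit_cell"
      using intS[of "\<lambda>z. \<Sum>i\<in>UNIV. \<Sum>j\<in>UNIV. G1 i j z"] by (simp add: cl cG1)
    have iK1ss: "(\<lambda>x. \<Sum>i\<in>UNIV. \<Sum>j\<in>UNIV. K1 i j (t0, x)) integrable_on unit_cell"
      using intS[of "\<lambda>z. \<Sum>i\<in>UNIV. \<Sum>j\<in>UNIV. K1 i j z"] by (simp add: cl cK1)
    have iG2s: "(\<lambda>x. \<Sum>j\<in>UNIV. G2 j (t0, x)) integrable_on unit_cell"
      using intS[of "\<lambda>z. \<Sum>j\<in>UNIV. G2 j z"] by (simp add: cl cG2)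
    have iK2s: "(\<lambda>x. \<Sum>j\<in>UNIV. K2 j (t0, x)) integrable_on unit_cell"
      using intS[of "\<lambda>z. \<Sum>j\<in>UNIV. K2 j z"] by (simp add: cl cK2)
    have iF1: "(\<lambda>x. F1 (t0, x)) integrable_on unit_cell" by (rule intS[OF cF1])
    have iF2: "(\<lambda>x. F2 (t0, x)) integrable_on unit_cell" by (rule intS[OF cF2])
    have ibp1: "integral unit_cell (\<lambda>x. G1 i j (t0, x)) = - integral unit_cell (\<lambda>x. K1 i j (t0, x))" for i j
      unfolding G1_def K1_def by (rule ibp[OF oI t0 cX[unfolded S_def] cW[unfolded S_def] pX pW])
    have ibp2: "integral unit_cell (\<lambda>x. G2 j (t0, x)) = - integral unit_cell (\<lambda>x. K2 j (t0, x))" for j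
      unfolding G2_def K2_def by (rule ibp[OF oI t0 cRU[unfolded S_def] cN[unfolded S_def] pRU pN])
    have PA: "(\<Sum>i\<in>UNIV. \<Sum>j\<in>UNIV. K1 i j z) + (\<Sum>j\<in>UNIV. K2 j z) = 2 * lam * F1 z + \<mu> * F2 z"
      if z: "z \<in> S" for z
    proof -
      have PdRU: "Pd i (RU j) z = R z * Pd i (U j) z + R z * Pd i L z * U j z" for i j
        unfolding RU_def using z by (simp add: rules dS cl cR cU PdRL)
      have Xv: "X i j z = - (R z * U i z * U j z) + 2 * \<nu> * (R z * ((Pd j (U i) z + Pd i (U j) z) / 2))
          + \<kappa>\<^sup>2 * (R z * Pd j (Pd i L) z) - \<mu> * (R z * Pd i (U j) z + R z * Pd i L z * U j z)" for i j
        unfolding X_def A1_def A2_def A3_def A4_def DU_def PdRU by simp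
      have Nv: "Pd j N z = (\<Sum>i\<in>UNIV. W i z * Pd j (W i) z)" for j
      proof -
        have "Pd j N z = (1/2) * (\<Sum>i\<in>UNIV. W i z * Pd j (W i) z + Pd j (W i) z * W i z)"
          unfolding N_def using z by (simp add: rules dS cl cW)
        also have "\<dots> = (\<Sum>i\<in>UNIV. W i z * Pd j (W i) z)"
          by (simp add: sum_distrib_left algebra_simps)
        finally show ?thesis .
      qed
      have bv: "Pd j (U i) z = Pd j (W i) z - \<mu> * Pd j (Pd i L) z" for i j
        unfolding W_def using z by (simp add: rules dS cl cU cL)
      have Hs: "Pd j (Pd i L) z = Pd i (Pd j L) z" for i j
        by (rule schwarz[OF oS z]) (simp_all add: dS cl cL z)
      have sq: "(sqrt (\<nu>\<^sup>2 - \<kappa>\<^sup>2))\<^sup>2 = \<nu>\<^sup>2 - \<kappa>\<^sup>2"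
      proof -
        have "\<kappa>\<^sup>2 < \<nu>\<^sup>2" using visc by (simp add: power_strict_mono)
        then show ?thesis by simp
      qed
      have k: "\<mu>^2 - 2*\<nu>*\<mu> + \<kappa>^2 = 0"
        unfolding mu_def using sq by (simp add: power2_eq_square algebra_simps)
      have lm: "lam = \<nu> - \<mu>" unfolding lam_def mu_def by simp
      have "(\<Sum>i\<in>UNIV. \<Sum>j\<in>UNIV. K1 i j z) + (\<Sum>j\<in>UNIV. K2 j z)
        = (\<Sum>i\<in>UNIV. \<Sum>j\<in>UNIV. Pd j (W i) z * (- (R z * U i z * U j z) + 2 * \<nu> * (R z * ((Pd j (U i) z + Pd i (U j) z) / 2))
          + \<kappa>\<^sup>2 * (R z * Pd j (Pd i L) z) - \<mu> * (R z * Pd i (U j) z + R z * Pd i L z * U j z)))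
          + (\<Sum>j\<in>UNIV. (\<Sum>i\<in>UNIV. W i z * Pd j (W i) z) * (R z * U j z))"
        unfolding K1_def K2_def Xv Nv RU_def ..
      also have "\<dots> = 2 * lam * (R z * (\<Sum>i\<in>UNIV. \<Sum>j\<in>UNIV. ((Pd j (W i) z + Pd i (W j) z) / 2)\<^sup>2))
          + \<mu> * (R z * (\<Sum>i\<in>UNIV. \<Sum>j\<in>UNIV. (Pd j (W i) z)\<^sup>2))"
        by (rule alg[where r="R z" and l="\<lambda>i. Pd i L z" and uu="\<lambda>i. U i z" and ww="\<lambda>i. W i z"
              and a="\<lambda>i j. Pd j (U i) z" and b="\<lambda>i j. Pd j (W i) z" and H="\<lambda>i j. Pd j (Pd i L) z", OF k lm])
           (simp_all add: W_def bv Hs)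
      finally show ?thesis unfolding F1_def F2_def .
    qed
    have st1: "(\<lambda>x. \<rho> t0 x * (\<Sum>i\<in>UNIV. \<Sum>j\<in>UNIV. (symgrad (w t0) i j x)\<^sup>2)) = (\<lambda>x. F1 (t0, x))"
      by (simp add: cv_sym[OF t0] F1_def R_def)
    have st2: "(\<lambda>x. \<rho> t0 x * (\<Sum>i\<in>UNIV. \<Sum>j\<in>UNIV. (pd j (\<lambda>y. w t0 y $ i) x)\<^sup>2)) = (\<lambda>x. F2 (t0, x))"
      by (simp add: cv_pdw[OF t0] F2_def R_def)
    have "integral unit_cell (\<lambda>x. dirder E (1, 0) (t0, x))
        = integral unit_cell (\<lambda>x. (\<Sum>i\<in>UNIV. \<Sum>j\<in>UNIV. G1 i j (t0, x)) + (\<Sum>j\<in>UNIV. G2 j (t0, x)))"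
      unfolding G1_def G2_def using P9[OF z0] by simp
    also have "\<dots> = (\<Sum>i\<in>UNIV. \<Sum>j\<in>UNIV. integral unit_cell (\<lambda>x. G1 i j (t0, x)))
                   + (\<Sum>j\<in>UNIV. integral unit_cell (\<lambda>x. G2 j (t0, x)))"
      by (simp add: integral_add[OF iG1ss iG2s] isum[OF iG1s] isum[OF iG1] isum[OF iG2])
    also have "\<dots> = - ((\<Sum>i\<in>UNIV. \<Sum>j\<in>UNIV. integral unit_cell (\<lambda>x. K1 i j (t0, x)))
                   + (\<Sum>j\<in>UNIV. integral unit_cell (\<lambda>x. K2 j (t0, x))))"
      by (simp add: ibp1 ibp2 sum_negf)
    also have "\<dots> = - integral unit_cell (\<lambda>x. (\<Sum>i\<in>UNIV. \<Sum>j\<in>UNIV. K1 i j (t0, x)) + (\<Sum>j\<in>UNIV. K2 j (t0, x)))"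
      by (simp add: integral_add[OF iK1ss iK2s] isum[OF iK1s] isum[OF iK1] isum[OF iK2])
    also have "\<dots> = - integral unit_cell (\<lambda>x. 2 * lam * F1 (t0, x) + \<mu> * F2 (t0, x))"
      using PA[OF z0] by simp
    also have "\<dots> = - (2 * lam * integral unit_cell (\<lambda>x. F1 (t0, x)) + \<mu> * integral unit_cell (\<lambda>x. F2 (t0, x)))"
    proof -
      have a1: "(\<lambda>x. 2 * lam * F1 (t0, x)) integrable_on unit_cell"
        using intS[of "\<lambda>z. 2 * lam * F1 z"] by (simp add: cl cF1)
      have a2: "(\<lambda>x. \<mu> * F2 (t0, x)) integrable_on unit_cell"
        using intS[of "\<lambda>z. \<mu> * F2 z"] by (simp add: cl cF2)
      show ?thesis by (simp add: integral_add[OF a1 a2])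
    qed
    finally show ?thesis unfolding st1 st2 .
  qed
  show "((\<lambda>s. integral unit_cell (\<lambda>x. \<rho> s x * (norm (w s x))\<^sup>2 / 2)) has_real_derivative
        - (2 * lam * integral unit_cell (\<lambda>x. \<rho> t0 x * (\<Sum>i\<in>UNIV. \<Sum>j\<in>UNIV. (symgrad (w t0) i j x)\<^sup>2))
           + \<mu> * integral unit_cell (\<lambda>x. \<rho> t0 x * (\<Sum>i\<in>UNIV. \<Sum>j\<in>UNIV. (pd j (\<lambda>y. w t0 y $ i) x)\<^sup>2))))
       (at t0)"
    using deriv1 unfolding key .
qed



end
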